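(* Let $\Omega=\mathbb{T}^d$ ($d=2$ or $3$), $\nu,\kappa>0$, and let $(\varrho_n,u_n)$ be a smooth solution, with $\varrho_n>0$, of $$\partial_{t}\varrho_n+\mathrm{div}(\varrho_n u_n)=0,\qquad \partial_{t}(\varrho_n u_n)+\mathrm{div}(\varrho_n u_n\otimes u_n)-2\nu\,\mathrm{div}(\varrho_n D(u_n))=\kappa\varrho_n\nabla\Delta\varrho_n$$ on $\Omega$. Then $$\frac{d}{dt}\int_{\Omega}\nu^{2}\varrho_n|\nabla\log\varrho_n|^{2}dx+\nu\kappa\int_{\Omega}|\nabla\nabla\varrho_n|^{2}dx=-\frac{d}{dt}\int_{\Omega}\nu u_n\cdot\nabla\varrho_n\, dx+\int_{\Omega}\nu\varrho_n\nabla u_n:{}^{t}\nabla u_n\, dx.$$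
   Context: $D(u)=(\nabla u+\nabla^{t}u)/2$, ${}^t\nabla u$ denotes the transpose of $\nabla u$, and $A:B=\sum_{ij}A_{ij}B_{ij}$. *)

theory Defs
  imports "HOL-Analysis.Analysis"
begin

fun Ck_on :: "nat \<Rightarrow> 'a::real_normed_vector set \<Rightarrow> ('a \<Rightarrow> real) \<Rightarrow> bool" where
  "Ck_on 0 S f = continuous_on S f"
| "Ck_on (Suc k) S f = (f differentiable_on S \<and>
      (\<forall>v. Ck_on k S (\<lambda>x. frechet_derivative f (at x) v)))"

definition smooth_on :: "'a::real_normed_vector set \<Rightarrow> ('a \<Rightarrow> real) \<Rightarrow> bool" where
  "smooth_on S f = (\<forall>k. Ck_on k S f)"

definition pd :: "'n::finite \<Rightarrow> (real^'n \<Rightarrow> real) \<Rightarrow> real^'n \<Rightarrow> real" where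
  "pd i f x = deriv (\<lambda>h. f (x + h *\<^sub>R axis i 1)) 0"

definition symgrad :: "(real^'n \<Rightarrow> real^'n) \<Rightarrow> real^'n \<Rightarrow> 'n::finite \<Rightarrow> 'n \<Rightarrow> real" where
  "symgrad v x i j = (pd j (\<lambda>y. v y $ i) x + pd i (\<lambda>y. v y $ j) x) / 2"

definition lap :: "(real^'n::finite \<Rightarrow> real) \<Rightarrow> real^'n \<Rightarrow> real" where
  "lap f x = (\<Sum>k\<in>UNIV. pd k (pd k f) x)"

text \<open>Torus T^d = R^d / Z^d: functions are 1-periodic in every coordinate; the
  integral over Omega is the integral over the unit cube cbox 0 One.\<close>
definition periodic1 :: "(real^'n::finite \<Rightarrow> 'b) \<Rightarrow> bool" where
  "periodic1 f = (\<forall>x i. f (x + axis i 1) = f x)"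

end

theory Submission
  imports Defs "HOL-Analysis.Analysis"
begin

definition dd :: "('a::real_normed_vector \<Rightarrow> real) \<Rightarrow> 'a \<Rightarrow> 'a \<Rightarrow> real" where
  "dd f v p = frechet_derivative f (at p) v"

lemma Ck_Suc_dd: "Ck_on (Suc k) S f = (f differentiable_on S \<and> (\<forall>v. Ck_on k S (dd f v)))"
  by (simp add: dd_def[abs_def])

declare Ck_on.simps(2)[simp del]

lemma Ck_mono: "Ck_on (Suc k) S f \<Longrightarrow> Ck_on k S f"
proof (induction k arbitrary: f)
  case 0 then show ?case by (simp add: Ck_Suc_dd differentiable_imp_continuous_on)
next
  case (Suc k) then show ?case by (simp add: Ck_Suc_dd)
qed

lemma Ck_le: "Ck_on k S f \<Longrightarrow> m \<le> k \<Longrightarrow> Ck_on m S f"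
  by (induction k) (auto dest: Ck_mono simp: le_Suc_eq)

lemma diff_at_open: "open S \<Longrightarrow> f differentiable_on S \<Longrightarrow> x \<in> S \<Longrightarrow> f differentiable (at x)"
  unfolding differentiable_on_def by (drule bspec, assumption, simp only: at_within_open)

lemma dd_has: "f differentiable (at x) \<Longrightarrow> (f has_derivative (\<lambda>v. dd f v x)) (at x)"
  unfolding dd_def by (simp add: frechet_derivative_works)

lemma dd_eqI: "(f has_derivative f') (at x) \<Longrightarrow> dd f v x = f' v"
  unfolding dd_def by (drule frechet_derivative_at) simp

lemma dd_cong_open: "open S \<Longrightarrow> x \<in> S \<Longrightarrow> (\<And>y. y \<in> S \<Longrightarrow> f y = g y) \<Longrightarrow> f differentiable (at x) \<Longrightarrow> dd f v x = dd g v x"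
  unfolding dd_def by (subst frechet_derivative_transform_within_open[of f x S g]) auto

lemma Ck_cong: "open S \<Longrightarrow> (\<And>x. x \<in> S \<Longrightarrow> f x = g x) \<Longrightarrow> Ck_on k S f \<Longrightarrow> Ck_on k S g"
proof (induction k arbitrary: f g)
  case 0 then show ?case using continuous_on_cong[of S S f g] by simp
next
  case (Suc k)
  have d: "f differentiable_on S" and c: "\<And>v. Ck_on k S (dd f v)" using Suc.prems by (auto simp: Ck_Suc_dd)
  have "g differentiable_on S"
    unfolding differentiable_on_def
  proof
    fix x assume x: "x \<in> S"
    have "f differentiable at x" using diff_at_open[OF Suc.prems(1) d x] .
    then obtain f' where "(f has_derivative f') (at x)" by (auto simp: differentiable_def)
    then have "(g has_derivative f') (at x)" using has_derivative_transform_within_open Suc.prems x by metis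
    then show "g differentiable at x within S" unfolding differentiable_def by (blast intro: has_derivative_at_withinI)
  qed
  moreover have "Ck_on k S (dd g v)" for v
  proof (rule Suc.IH[OF Suc.prems(1) _ c[of v]])
    fix x assume x: "x \<in> S"
    show "dd f v x = dd g v x"
      by (rule dd_cong_open[OF Suc.prems(1) x Suc.prems(2) diff_at_open[OF Suc.prems(1) d x]])
  qed
  ultimately show ?case by (simp add: Ck_Suc_dd)
qed

lemma Ck_const: "Ck_on k S (\<lambda>x. c)"
proof (induction k arbitrary: c)
  case 0 then show ?case by simp
next
  case (Suc k)
  have e: "dd (\<lambda>x. c) v = (\<lambda>x. 0)" for v by (rule ext, rule dd_eqI) (rule has_derivative_const)
  show ?case unfolding Ck_Suc_dd e using Suc.IH by simp
qed

lemma Ck_add: "open S \<Longrightarrow> Ck_on k S f \<Longrightarrow> Ck_on k S g \<Longrightarrow> Ck_on k S (\<lambda>x. f x + g x)"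
proof (induction k arbitrary: f g)
  case 0 then show ?case by (auto intro: continuous_intros)
next
  case (Suc k)
  have df: "f differentiable_on S" and cf: "\<And>v. Ck_on k S (dd f v)"
   and dg: "g differentiable_on S" and cg: "\<And>v. Ck_on k S (dd g v)" using Suc.prems by (auto simp: Ck_Suc_dd)
  have "Ck_on k S (dd (\<lambda>x. f x + g x) v)" for v
  proof (rule Ck_cong[OF Suc.prems(1) _ Suc.IH[OF Suc.prems(1) cf[of v] cg[of v]]])
    fix x assume x: "x \<in> S"
    show "dd f v x + dd g v x = dd (\<lambda>x. f x + g x) v x"
      using dd_has[OF diff_at_open[OF Suc.prems(1) df x]] dd_has[OF diff_at_open[OF Suc.prems(1) dg x]]
      by (subst dd_eqI[OF has_derivative_add]) auto
  qed
  then show ?case using df dg by (auto simp: Ck_Suc_dd intro: differentiable_on_add)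
qed

lemma Ck_mult: "open S \<Longrightarrow> Ck_on k S f \<Longrightarrow> Ck_on k S g \<Longrightarrow> Ck_on k S (\<lambda>x. f x * g x)"
proof (induction k arbitrary: f g)
  case 0 then show ?case by (auto intro: continuous_intros)
next
  case (Suc k)
  have df: "f differentiable_on S" and cf: "\<And>v. Ck_on k S (dd f v)"
   and dg: "g differentiable_on S" and cg: "\<And>v. Ck_on k S (dd g v)" using Suc.prems by (auto simp: Ck_Suc_dd)
  have f: "Ck_on k S f" and g: "Ck_on k S g" using Suc.prems Ck_mono by auto
  have "Ck_on k S (dd (\<lambda>x. f x * g x) v)" for v
  proof (rule Ck_cong[OF Suc.prems(1) _ Ck_add[OF Suc.prems(1) Suc.IH[OF Suc.prems(1) f cg[of v]] Suc.IH[OF Suc.prems(1) cf[of v] g]]])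
    fix x assume x: "x \<in> S"
    show "f x * dd g v x + dd f v x * g x = dd (\<lambda>x. f x * g x) v x"
      using dd_has[OF diff_at_open[OF Suc.prems(1) df x]] dd_has[OF diff_at_open[OF Suc.prems(1) dg x]]
      by (subst dd_eqI[OF has_derivative_mult]) auto
  qed
  then show ?case using df dg by (auto simp: Ck_Suc_dd intro: differentiable_on_mult)
qed

lemma Ck_inverse: "open S \<Longrightarrow> Ck_on k S f \<Longrightarrow> (\<And>x. x \<in> S \<Longrightarrow> f x \<noteq> 0) \<Longrightarrow> Ck_on k S (\<lambda>x. inverse (f x))"
proof (induction k arbitrary: f)
  case 0 then show ?case by (auto intro!: continuous_intros)
next
  case (Suc k)
  have df: "f differentiable_on S" and cf: "\<And>v. Ck_on k S (dd f v)" using Suc.prems by (auto simp: Ck_Suc_dd)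
  have f: "Ck_on k S f" using Suc.prems Ck_mono by auto
  have i: "Ck_on k S (\<lambda>x. inverse (f x))" using Suc.IH[OF Suc.prems(1) f Suc.prems(3)] .
  have "Ck_on k S (dd (\<lambda>x. inverse (f x)) v)" for v
  proof (rule Ck_cong[OF Suc.prems(1) _ Ck_mult[OF Suc.prems(1) Ck_mult[OF Suc.prems(1) Ck_mult[OF Suc.prems(1) Ck_const cf[of v]] i] i]])
    fix x assume x: "x \<in> S"
    show "(-1) * dd f v x * inverse (f x) * inverse (f x) = dd (\<lambda>x. inverse (f x)) v x"
    proof -
      have h: "((\<lambda>x. inverse (f x)) has_derivative (\<lambda>h. - (inverse (f x) * dd f h x * inverse (f x)))) (at x)"
        by (rule Deriv.has_derivative_inverse[OF Suc.prems(3)[OF x] dd_has[OF diff_at_open[OF Suc.prems(1) df x]]])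
      show ?thesis unfolding dd_eqI[OF h] by simp
    qed
  qed
  moreover have "(\<lambda>x. inverse (f x)) differentiable_on S"
    unfolding differentiable_on_def
  proof
    fix x assume x: "x \<in> S"
    show "(\<lambda>x. inverse (f x)) differentiable at x within S"
      using Deriv.has_derivative_inverse[OF Suc.prems(3)[OF x] dd_has[OF diff_at_open[OF Suc.prems(1) df x]]]
      unfolding differentiable_def by (blast intro: has_derivative_at_withinI)
  qed
  ultimately show ?case by (simp add: Ck_Suc_dd)
qed

lemma sm_diffat: "open S \<Longrightarrow> smooth_on S f \<Longrightarrow> x \<in> S \<Longrightarrow> f differentiable (at x)"
  unfolding smooth_on_def by (metis Ck_Suc_dd diff_at_open)

lemma sm_cont: "smooth_on S f \<Longrightarrow> continuous_on S f"
  unfolding smooth_on_def by (metis Ck_on.simps(1))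

lemma sm_const[simp]: "smooth_on S (\<lambda>x. c)"
  unfolding smooth_on_def using Ck_const by blast

lemma sm_add[simp]: "open S \<Longrightarrow> smooth_on S f \<Longrightarrow> smooth_on S g \<Longrightarrow> smooth_on S (\<lambda>x. f x + g x)"
  unfolding smooth_on_def using Ck_add by blast

lemma sm_mult[simp]: "open S \<Longrightarrow> smooth_on S f \<Longrightarrow> smooth_on S g \<Longrightarrow> smooth_on S (\<lambda>x. f x * g x)"
  unfolding smooth_on_def using Ck_mult by blast

lemma sm_minus[simp]: "open S \<Longrightarrow> smooth_on S f \<Longrightarrow> smooth_on S (\<lambda>x. - f x)"
  using sm_mult[of S "\<lambda>x. -1" f] by simp

lemma sm_diff[simp]: "open S \<Longrightarrow> smooth_on S f \<Longrightarrow> smooth_on S g \<Longrightarrow> smooth_on S (\<lambda>x. f x - g x)"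
  using sm_add[of S f "\<lambda>x. - g x"] by simp

lemma sm_power[simp]: "open S \<Longrightarrow> smooth_on S f \<Longrightarrow> smooth_on S (\<lambda>x. f x ^ n)"
  by (induction n) simp_all

lemma sm_sum[simp]: "open S \<Longrightarrow> (\<And>i. smooth_on S (f i)) \<Longrightarrow> smooth_on S (\<lambda>x. \<Sum>i\<in>I. f i x)"
proof (induction I rule: infinite_finite_induct)
  case (insert i I) then show ?case using sm_add[of S "f i" "\<lambda>x. \<Sum>i\<in>I. f i x"] by simp
qed simp_all

lemma sm_inverse: "open S \<Longrightarrow> smooth_on S f \<Longrightarrow> (\<And>x. x \<in> S \<Longrightarrow> f x \<noteq> 0) \<Longrightarrow> smooth_on S (\<lambda>x. inverse (f x))"
  unfolding smooth_on_def using Ck_inverse by blast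

lemma sm_dd[simp]: "smooth_on S f \<Longrightarrow> smooth_on S (dd f v)"
  unfolding smooth_on_def by (metis Ck_Suc_dd)

lemma has_derivative_ln_comp:
  fixes f :: "'a::real_normed_vector \<Rightarrow> real"
  assumes "f x > 0" "(f has_derivative f') (at x)"
  shows "((\<lambda>x. ln (f x)) has_derivative (\<lambda>h. f' h * inverse (f x))) (at x)"
proof -
  have "(ln has_derivative (\<lambda>h. h * inverse (f x))) (at (f x))"
    using DERIV_ln[OF assms(1)] unfolding has_field_derivative_def
    by (rule has_derivative_eq_rhs) (simp add: fun_eq_iff)
  from has_derivative_compose[OF assms(2) this] show ?thesis by simp
qed

lemma sm_ln: "open S \<Longrightarrow> smooth_on S f \<Longrightarrow> (\<And>x. x \<in> S \<Longrightarrow> f x > 0) \<Longrightarrow> smooth_on S (\<lambda>x. ln (f x))"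
  unfolding smooth_on_def
proof
  fix k assume S: "open S" and f: "\<forall>k. Ck_on k S f" and pos: "\<And>x. x \<in> S \<Longrightarrow> f x > 0"
  show "Ck_on k S (\<lambda>x. ln (f x))"
  proof (cases k)
    case 0 then show ?thesis using f[rule_format, of 0] pos
      by (auto intro!: continuous_intros simp: less_imp_neq[symmetric])
  next
    case (Suc m)
    have df: "f differentiable_on S" and cf: "\<And>v. Ck_on m S (dd f v)" using f[rule_format, of "Suc m"] by (auto simp: Ck_Suc_dd)
    have i: "Ck_on m S (\<lambda>x. inverse (f x))" using Ck_inverse[OF S f[rule_format, of m]] pos by force
    have h: "\<And>x. x \<in> S \<Longrightarrow> ((\<lambda>x. ln (f x)) has_derivative (\<lambda>h. dd f h x * inverse (f x))) (at x)"
      using has_derivative_ln_comp pos dd_has diff_at_open[OF S df] by blast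
    have "Ck_on m S (dd (\<lambda>x. ln (f x)) v)" for v
      by (rule Ck_cong[OF S _ Ck_mult[OF S cf[of v] i]]) (simp add: dd_eqI[OF h])
    moreover have "(\<lambda>x. ln (f x)) differentiable_on S"
      using h by (auto simp: differentiable_on_def differentiable_def intro: has_derivative_at_withinI)
    ultimately show ?thesis using Suc by (simp add: Ck_Suc_dd)
  qed
qed

lemma dd_const[simp]: "dd (\<lambda>x. c) v p = 0"
  by (rule dd_eqI) (rule has_derivative_const)

lemma dd_add: "f differentiable (at p) \<Longrightarrow> g differentiable (at p) \<Longrightarrow> dd (\<lambda>x. f x + g x) v p = dd f v p + dd g v p"
  by (subst dd_eqI[OF has_derivative_add[OF dd_has dd_has]]) auto

lemma dd_mult: "f differentiable (at p) \<Longrightarrow> g differentiable (at p) \<Longrightarrow> dd (\<lambda>x. f x * g x) v p = f p * dd g v p + dd f v p * g p"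
  by (subst dd_eqI[OF has_derivative_mult[OF dd_has dd_has]]) auto

lemma dd_minus: "f differentiable (at p) \<Longrightarrow> dd (\<lambda>x. - f x) v p = - dd f v p"
  by (subst dd_eqI[OF has_derivative_minus[OF dd_has]]) auto

lemma dd_diff: "f differentiable (at p) \<Longrightarrow> g differentiable (at p) \<Longrightarrow> dd (\<lambda>x. f x - g x) v p = dd f v p - dd g v p"
  by (subst dd_eqI[OF has_derivative_diff[OF dd_has dd_has]]) auto

lemma dd_sum: "(\<And>i. i \<in> I \<Longrightarrow> f i differentiable (at p)) \<Longrightarrow> dd (\<lambda>x. \<Sum>i\<in>I. f i x) v p = (\<Sum>i\<in>I. dd (f i) v p)"
  by (subst dd_eqI[OF has_derivative_sum[OF dd_has]]) auto

lemma dd_ln: "f differentiable (at p) \<Longrightarrow> f p > 0 \<Longrightarrow> dd (\<lambda>x. ln (f x)) v p = dd f v p * inverse (f p)"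
  by (subst dd_eqI[OF has_derivative_ln_comp[OF _ dd_has]]) auto

lemma dd_power2: "f differentiable (at p) \<Longrightarrow> dd (\<lambda>x. (f x)^2) v p = 2 * f p * dd f v p"
  unfolding power2_eq_square by (simp add: dd_mult)

lemma dd_linear: "f differentiable (at p) \<Longrightarrow> dd f (c *\<^sub>R v) p = c * dd f v p"
proof -
  assume "f differentiable (at p)"
  then have "linear (\<lambda>v. dd f v p)" using dd_has has_derivative_linear by blast
  from linear_scale[OF this, of c v] show ?thesis by simp
qed

lemma line_deriv:
  assumes "f differentiable (at (p + a *\<^sub>R v))"
  shows "((\<lambda>s. f (p + s *\<^sub>R v)) has_field_derivative dd f v (p + a *\<^sub>R v)) (at a within T)"
proof -
  have "((\<lambda>s. p + s *\<^sub>R v) has_derivative (\<lambda>s. s *\<^sub>R v)) (at a within T)"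
    by (auto intro!: derivative_eq_intros)
  from has_derivative_compose[OF this dd_has[OF assms]]
  have "((\<lambda>s. f (p + s *\<^sub>R v)) has_derivative (\<lambda>s. dd f (s *\<^sub>R v) (p + a *\<^sub>R v))) (at a within T)" by simp
  then show ?thesis unfolding has_field_derivative_def dd_linear[OF assms]
    by (rule has_derivative_eq_rhs) (simp add: fun_eq_iff)
qed

lemma real_cbox: "cbox (a::real) b = {a..b}" by (rule cbox_interval)

lemma schwarz:
  fixes f :: "'a::real_normed_vector \<Rightarrow> real"
  assumes S: "open S" and f: "smooth_on S f" and p: "p \<in> S"
  shows "dd (dd f v) w p = dd (dd f w) v p"
proof -
  obtain e where e: "e > 0" "ball p e \<subseteq> S" using S p open_contains_ball by blast
  define d where "d = e / (2 * (norm v + norm w + 1))"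
  have pos2: "2 * (norm v + norm w + 1) > 0" by (simp add: add_nonneg_pos)
  then have d: "d > 0" using e(1) unfolding d_def by (intro divide_pos_pos)
  define q where "q = (\<lambda>a b. p + a *\<^sub>R v + b *\<^sub>R w)"
  have qS: "q a b \<in> S" if "\<bar>a\<bar> \<le> d" "\<bar>b\<bar> \<le> d" for a b
  proof -
    have "norm (a *\<^sub>R v + b *\<^sub>R w) \<le> \<bar>a\<bar> * norm v + \<bar>b\<bar> * norm w"
      by (metis norm_scaleR norm_triangle_ineq)
    also have "\<dots> \<le> d * norm v + d * norm w"
      using that by (intro add_mono mult_right_mono) auto
    also have "\<dots> < e"
    proof -
      have nz: "2 * (norm v + norm w + 1) \<noteq> 0" using pos2 by linarith
      have "d * (2 * (norm v + norm w + 1)) = e" unfolding d_def using nz by simp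
      then have "d * norm v + d * norm w + d = e / 2" by (simp add: algebra_simps)
      then show ?thesis using d e by linarith
    qed
    finally have "dist (q a b) p < e" by (simp add: q_def dist_norm add.assoc)
    then have "q a b \<in> ball p e" by (simp add: dist_commute)
    then show ?thesis using e by auto
  qed
  have smf: "smooth_on S f" "smooth_on S (dd f v)" "smooth_on S (dd f w)"
     "smooth_on S (dd (dd f v) w)" "smooth_on S (dd (dd f w) v)" using f by simp_all
  have dif: "\<And>g x. smooth_on S g \<Longrightarrow> x \<in> S \<Longrightarrow> g differentiable (at x)" using sm_diffat[OF S] by blast
  have qv: "q a b = (p + b *\<^sub>R w) + a *\<^sub>R v" for a b by (simp add: q_def algebra_simps)
  have qw: "q a b = (p + a *\<^sub>R v) + b *\<^sub>R w" for a b by (simp add: q_def)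
  have contq: "continuous_on X (\<lambda>(a, b). q a b)" for X by (auto simp: q_def split_beta intro!: continuous_intros)
  have step1: "f (q a b) - f (q a (-d)) = integral {-d..b} (\<lambda>t. dd f w (q a t))"
    if "\<bar>a\<bar> \<le> d" "\<bar>b\<bar> \<le> d" for a b
  proof -
    have "((\<lambda>t. dd f w (q a t)) has_integral (f (q a b) - f (q a (-d)))) {-d..b}"
    proof (rule fundamental_theorem_of_calculus)
      show "-d \<le> b" using that by auto
      fix t assume t: "t \<in> {-d..b}"
      have "q a t \<in> S" using that t by (intro qS) auto
      then have "((\<lambda>s. f ((p + a *\<^sub>R v) + s *\<^sub>R w)) has_field_derivative dd f w ((p + a *\<^sub>R v) + t *\<^sub>R w)) (at t within {-d..b})"
        by (intro line_deriv dif[OF smf(1)]) (simp add: qw)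
      then show "((\<lambda>t. f (q a t)) has_vector_derivative dd f w (q a t)) (at t within {-d..b})"
        unfolding has_real_derivative_iff_has_vector_derivative qw .
    qed
    then show ?thesis by (rule integral_unique[symmetric])
  qed
  have step2: "dd f v (q 0 b) - dd f v (q 0 (-d)) = integral {-d..b} (\<lambda>t. dd (dd f w) v (q 0 t))"
    if b: "\<bar>b\<bar> \<le> d" for b
  proof -
    let ?U = "{-d<..<d}"
    have D1: "((\<lambda>a. f (q a b) - f (q a (-d))) has_field_derivative (dd f v (q 0 b) - dd f v (q 0 (-d)))) (at 0)"
    proof (rule DERIV_diff)
      show "((\<lambda>a. f (q a b)) has_field_derivative dd f v (q 0 b)) (at 0)"
        unfolding qv using line_deriv[OF dif[OF smf(1)], of "p + b *\<^sub>R w" 0 v UNIV] qS[of 0 b] b d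
        by (simp add: qv)
      show "((\<lambda>a. f (q a (-d))) has_field_derivative dd f v (q 0 (-d))) (at 0)"
        unfolding qv using line_deriv[OF dif[OF smf(1)], of "p + (-d) *\<^sub>R w" 0 v UNIV] qS[of 0 "-d"] d
        by (simp add: qv)
    qed
    have D2: "((\<lambda>a. integral (cbox (-d) b) (\<lambda>t. dd f w (q a t))) has_field_derivative
               integral (cbox (-d) b) (\<lambda>t. dd (dd f w) v (q 0 t))) (at 0 within ?U)"
    proof (rule leibniz_rule_field_derivative[where f="\<lambda>a t. dd f w (q a t)" and fx="\<lambda>a t. dd (dd f w) v (q a t)"])
      fix a t assume a: "a \<in> ?U" and t: "t \<in> cbox (-d) b"
      have "q a t \<in> S" using a t b by (intro qS) (auto simp: real_cbox)
      then show "((\<lambda>a. dd f w (q a t)) has_field_derivative dd (dd f w) v (q a t)) (at a within ?U)"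
        using line_deriv[OF dif[OF smf(3)], of "p + t *\<^sub>R w" a v ?U] by (simp add: qv)
    next
      fix a assume a: "a \<in> ?U"
      have "continuous_on (cbox (-d) b) (\<lambda>t. dd f w (q a t))"
      proof (rule continuous_on_compose2[OF sm_cont[OF smf(3)]])
        show "continuous_on (cbox (-d) b) (q a)" by (auto simp: q_def intro!: continuous_intros)
        show "q a ` cbox (-d) b \<subseteq> S" using a b by (auto simp: real_cbox intro!: qS)
      qed
      then show "(\<lambda>t. dd f w (q a t)) integrable_on cbox (-d) b" by (rule integrable_continuous)
    next
      have "continuous_on (?U \<times> cbox (-d) b) (\<lambda>x. dd (dd f w) v ((\<lambda>(a, t). q a t) x))"
      proof (rule continuous_on_compose2[OF sm_cont[OF smf(5)] contq])
        show "(\<lambda>(a, t). q a t) ` (?U \<times> cbox (- d) b) \<subseteq> S" using b by (auto simp: real_cbox intro!: qS)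
      qed
      then show "continuous_on (?U \<times> cbox (-d) b) (\<lambda>(a, t). dd (dd f w) v (q a t))"
        by (simp add: split_beta)
    qed (use d in auto)
    then have D2': "((\<lambda>a. integral {-d..b} (\<lambda>t. dd f w (q a t))) has_field_derivative
               integral {-d..b} (\<lambda>t. dd (dd f w) v (q 0 t))) (at 0)"
      using d by (simp add: real_cbox at_within_open[of 0 ?U])
    have D3: "((\<lambda>a. f (q a b) - f (q a (-d))) has_field_derivative
               integral {-d..b} (\<lambda>t. dd (dd f w) v (q 0 t))) (at 0)"
    proof (rule has_field_derivative_transform_within_open[OF D2' _ _ ])
      fix a assume "a \<in> ?U"
      then show "integral {-d..b} (\<lambda>t. dd f w (q a t)) = f (q a b) - f (q a (-d))"
        using step1[of a b] b by auto
    qed (use d in auto)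
    show ?thesis using DERIV_unique[OF D1 D3] .
  qed
  have q0: "q 0 b = p + b *\<^sub>R w" for b by (simp add: q_def)
  have A: "((\<lambda>b. dd f v (q 0 b) - dd f v (q 0 (-d))) has_vector_derivative dd (dd f v) w p) (at 0 within {-d..d})"
  proof -
    have "((\<lambda>b. dd f v (p + b *\<^sub>R w)) has_field_derivative dd (dd f v) w (p + 0 *\<^sub>R w)) (at 0 within {-d..d})"
      by (rule line_deriv) (use dif[OF smf(2)] p in simp)
    then have "((\<lambda>b. dd f v (p + b *\<^sub>R w) - dd f v (q 0 (-d))) has_field_derivative dd (dd f v) w p) (at 0 within {-d..d})"
      by (auto intro!: derivative_eq_intros)
    then show ?thesis unfolding has_real_derivative_iff_has_vector_derivative q0 .
  qed
  have B: "((\<lambda>b. integral {-d..b} (\<lambda>t. dd (dd f w) v (q 0 t))) has_vector_derivative dd (dd f w) v p) (at 0 within {-d..d})"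
  proof -
    have "continuous_on {-d..d} (\<lambda>t. dd (dd f w) v (q 0 t))"
    proof (rule continuous_on_compose2[OF sm_cont[OF smf(5)]])
      show "continuous_on {-d..d} (q 0)" by (auto simp: q_def intro!: continuous_intros)
      show "q 0 ` {-d..d} \<subseteq> S" using d by (auto intro!: qS)
    qed
    from integral_has_vector_derivative[OF this, of 0] d show ?thesis by (simp add: q0)
  qed
  have B': "((\<lambda>b. dd f v (q 0 b) - dd f v (q 0 (-d))) has_vector_derivative dd (dd f w) v p) (at 0 within {-d..d})"
    by (rule has_vector_derivative_transform[OF _ _ B]) (use d step2 in auto)
  show ?thesis
    using vector_derivative_unique_within_closed_interval[of "-d" d 0, unfolded real_cbox, OF _ _ A B'] d by simp
qed

definition Ej :: "'n \<Rightarrow> real \<times> (real^'n::finite)" where "Ej j = (0, axis j 1)"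
definition E0 :: "real \<times> (real^'n::finite)" where "E0 = (1, 0)"
definition per :: "real \<Rightarrow> real \<Rightarrow> (real \<times> (real^'n::finite) \<Rightarrow> real) \<Rightarrow> bool" where
  "per a b G \<longleftrightarrow> (\<forall>s\<in>{a<..<b}. \<forall>x i. G (s, x + axis i 1) = G (s, x))"

lemma Ej_shift: "(t, x) + h *\<^sub>R Ej j = (t, x + h *\<^sub>R axis j 1)" by (simp add: Ej_def)
lemma E0_shift: "(0, x) + s *\<^sub>R E0 = (s, x)" by (simp add: E0_def)

lemma per_const[simp]: "per a b (\<lambda>p. c)" by (simp add: per_def)
lemma per_add[simp]: "per a b f \<Longrightarrow> per a b g \<Longrightarrow> per a b (\<lambda>p. f p + g p)" by (simp add: per_def)
lemma per_diff[simp]: "per a b f \<Longrightarrow> per a b g \<Longrightarrow> per a b (\<lambda>p. f p - g p)" by (simp add: per_def)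
lemma per_mult[simp]: "per a b f \<Longrightarrow> per a b g \<Longrightarrow> per a b (\<lambda>p. f p * g p)" by (simp add: per_def)
lemma per_minus[simp]: "per a b f \<Longrightarrow> per a b (\<lambda>p. - f p)" by (simp add: per_def)
lemma per_power[simp]: "per a b f \<Longrightarrow> per a b (\<lambda>p. f p ^ n)" by (simp add: per_def)
lemma per_ln[simp]: "per a b f \<Longrightarrow> per a b (\<lambda>p. ln (f p))" by (simp add: per_def)
lemma per_inverse[simp]: "per a b f \<Longrightarrow> per a b (\<lambda>p. inverse (f p))" by (simp add: per_def)
lemma per_sum[simp]: "(\<And>i. per a b (f i)) \<Longrightarrow> per a b (\<lambda>p. \<Sum>i\<in>I. f i p)" by (simp add: per_def)

lemma open_Om[simp]: "open ({a<..<(b::real)} \<times> (UNIV :: (real^'n::finite) set))"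
  by (rule open_Times) simp_all

lemma per_dd[simp]:
  fixes G :: "real \<times> (real^'n::finite) \<Rightarrow> real"
  assumes sm: "smooth_on ({a<..<b} \<times> UNIV) G" and per: "per a b G"
  shows "per a b (dd G v)"
  unfolding per_def
proof (intro ballI allI)
  fix s :: real and x :: "real^'n" and i :: 'n assume s: "s \<in> {a<..<b}"
  define c :: "real \<times> (real^'n)" where "c = (0, axis i 1)"
  define q where "q = (s, x)"
  have qc: "q + c = (s, x + axis i 1)" by (simp add: q_def c_def)
  have O: "open ({a<..<b} \<times> (UNIV :: (real^'n) set))" by simp
  have dq: "G differentiable (at (q + c))" using sm_diffat[OF O sm] s by (simp add: qc)
  have h: "((\<lambda>y. G (y + c)) has_derivative (\<lambda>w. dd G w (q + c))) (at q)"
    using has_derivative_compose[OF has_derivative_add_const[OF has_derivative_ident] dd_has[OF dq]] by simp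
  have "dd G v (q + c) = dd (\<lambda>y. G (y + c)) v q" by (rule dd_eqI[OF h, symmetric])
  also have "\<dots> = dd G v q"
  proof (rule dd_cong_open[OF O])
    show "q \<in> {a<..<b} \<times> UNIV" using s by (simp add: q_def)
    show "(\<lambda>y. G (y + c)) differentiable at q" using h by (auto simp: differentiable_def)
    fix y :: "real \<times> (real^'n)" assume "y \<in> {a<..<b} \<times> UNIV"
    then show "G (y + c) = G y" using per unfolding per_def c_def by (cases y) auto
  qed
  moreover have qc': "(s, x) + c = (s, x + axis i 1)" by (simp add: c_def)
  ultimately show "dd G v (s, x + axis i 1) = dd G v (s, x)" unfolding q_def qc' by simp
qed

lemma axis_comp: "(axis j (1::real)) $ i = (if i = j then 1 else 0)" by (simp add: axis_def)
lemma One_comp[simp]: "(One::real^'n) $ i = 1" by (simp add: cart_eq_inner_axis)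

lemma lo_eq:
  fixes c :: real
  assumes c: "0 \<le> c" "c \<le> 1"
  shows "cbox (0::real^'n::finite) One \<inter> {x. x \<bullet> axis j 1 \<le> c} = cbox 0 (One - (1 - c) *\<^sub>R axis j 1)"
proof (rule set_eqI)
  fix x :: "real^'n"
  have comp: "(One - (1 - c) *\<^sub>R axis j 1) $ i = (if i = j then c else 1)" for i
    unfolding vector_minus_component vector_scaleR_component One_comp axis_comp by simp
  have L: "x \<in> cbox 0 One \<inter> {x. x \<bullet> axis j 1 \<le> c} \<longleftrightarrow> (\<forall>i. 0 \<le> x$i \<and> x$i \<le> 1) \<and> x$j \<le> c"
    unfolding Int_iff mem_Collect_eq mem_box_cart One_comp inner_axis by simp
  have R: "x \<in> cbox 0 (One - (1 - c) *\<^sub>R axis j 1) \<longleftrightarrow> (\<forall>i. 0 \<le> x$i \<and> x$i \<le> (if i = j then c else 1))"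
    unfolding mem_box_cart comp One_comp by simp
  have "(\<forall>i. 0 \<le> x$i \<and> x$i \<le> 1) \<and> x$j \<le> c \<longleftrightarrow> (\<forall>i. 0 \<le> x$i \<and> x$i \<le> (if i = j then c else 1))"
  proof
    assume "(\<forall>i. 0 \<le> x$i \<and> x$i \<le> 1) \<and> x$j \<le> c"
    then show "\<forall>i. 0 \<le> x$i \<and> x$i \<le> (if i = j then c else 1)" by simp
  next
    assume H: "\<forall>i. 0 \<le> x$i \<and> x$i \<le> (if i = j then c else 1)"
    have "x$j \<le> c" using H[rule_format, of j] by simp
    moreover have "0 \<le> x$i \<and> x$i \<le> 1" for i using H[rule_format, of i] c by (cases "i = j") auto
    ultimately show "(\<forall>i. 0 \<le> x$i \<and> x$i \<le> 1) \<and> x$j \<le> c" by blast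
  qed
  then show "x \<in> cbox 0 One \<inter> {x. x \<bullet> axis j 1 \<le> c} \<longleftrightarrow> x \<in> cbox 0 (One - (1 - c) *\<^sub>R axis j 1)"
    using L R by blast
qed

lemma hi_eq:
  fixes c :: real
  assumes c: "0 \<le> c" "c \<le> 1"
  shows "cbox (0::real^'n::finite) One \<inter> {x. x \<bullet> axis j 1 \<ge> c} = cbox (c *\<^sub>R axis j 1) One"
proof (rule set_eqI)
  fix x :: "real^'n"
  have comp: "(c *\<^sub>R axis j 1) $ i = (if i = j then c else 0)" for i by (simp add: axis_comp)
  have L: "x \<in> cbox 0 One \<inter> {x. x \<bullet> axis j 1 \<ge> c} \<longleftrightarrow> (\<forall>i. 0 \<le> x$i \<and> x$i \<le> 1) \<and> c \<le> x$j"
    unfolding Int_iff mem_Collect_eq mem_box_cart One_comp inner_axis by simp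
  have R: "x \<in> cbox (c *\<^sub>R axis j 1) One \<longleftrightarrow> (\<forall>i. (if i = j then c else 0) \<le> x$i \<and> x$i \<le> 1)"
    unfolding mem_box_cart comp One_comp by simp
  have "(\<forall>i. 0 \<le> x$i \<and> x$i \<le> 1) \<and> c \<le> x$j \<longleftrightarrow> (\<forall>i. (if i = j then c else 0) \<le> x$i \<and> x$i \<le> 1)"
  proof
    assume "(\<forall>i. 0 \<le> x$i \<and> x$i \<le> 1) \<and> c \<le> x$j"
    then show "\<forall>i. (if i = j then c else 0) \<le> x$i \<and> x$i \<le> 1" by simp
  next
    assume H: "\<forall>i. (if i = j then c else 0) \<le> x$i \<and> x$i \<le> 1"
    have "c \<le> x$j" using H[rule_format, of j] by simp
    moreover have "0 \<le> x$i \<and> x$i \<le> 1" for i using H[rule_format, of i] c by (cases "i = j") auto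
    ultimately show "(\<forall>i. 0 \<le> x$i \<and> x$i \<le> 1) \<and> c \<le> x$j" by blast
  qed
  then show "x \<in> cbox 0 One \<inter> {x. x \<bullet> axis j 1 \<ge> c} \<longleftrightarrow> x \<in> cbox (c *\<^sub>R axis j 1) One"
    using L R by blast
qed

lemma int_shift:
  fixes f :: "real^'n::finite \<Rightarrow> real"
  assumes "continuous_on UNIV f"
  shows "integral (cbox a b) (\<lambda>x. f (x + c)) = integral (cbox (a + c) (b + c)) f"
proof -
  have "(f has_integral integral (cbox (a + c) (b + c)) f) (cbox (a + c) (b + c))"
    by (rule integrable_integral, rule integrable_continuous, rule continuous_on_subset[OF assms]) simp
  then have "((f \<circ> (+) c) has_integral integral (cbox (a + c) (b + c)) f) (cbox a b)"
    using has_integral_shift_cbox_iff by blast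
  then show ?thesis by (simp add: o_def add.commute integral_unique)
qed

lemma trans_inv:
  fixes g :: "real^'n::finite \<Rightarrow> real"
  assumes cont: "continuous_on UNIV g" and per: "\<And>x. g (x + axis j 1) = g x" and h: "0 \<le> h" "h \<le> 1"
  shows "integral (cbox 0 One) (\<lambda>x. g (x + h *\<^sub>R axis j 1)) = integral (cbox 0 One) g"
proof -
  define k :: "real^'n" where "k = axis j 1"
  have kB: "k \<in> Basis" by (simp add: k_def)
  have contf: "continuous_on UNIV (\<lambda>x. g (x + h *\<^sub>R k))"
    by (rule continuous_on_compose2[OF cont]) (auto intro!: continuous_intros)
  have intf: "(\<lambda>x. g (x + h *\<^sub>R k)) integrable_on cbox 0 One"
    using contf by (intro integrable_continuous) (auto intro: continuous_on_subset)
  have intg: "g integrable_on cbox 0 One"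
    using cont by (intro integrable_continuous) (auto intro: continuous_on_subset)
  have per': "g (y + (h - 1) *\<^sub>R k) = g (y + h *\<^sub>R k)" for y
  proof -
    have "g (y + (h - 1) *\<^sub>R k) = g (y + (h - 1) *\<^sub>R k + k)" using per unfolding k_def by simp
    also have "y + (h - 1) *\<^sub>R k + k = y + h *\<^sub>R k" by (simp add: algebra_simps)
    finally show ?thesis .
  qed
  have "integral (cbox 0 One) (\<lambda>x. g (x + h *\<^sub>R k)) =
        integral (cbox 0 One \<inter> {x. x \<bullet> k \<le> 1 - h}) (\<lambda>x. g (x + h *\<^sub>R k)) +
        integral (cbox 0 One \<inter> {x. x \<bullet> k \<ge> 1 - h}) (\<lambda>x. g (x + h *\<^sub>R k))"
    by (rule integral_split[OF intf kB])
  also have "integral (cbox 0 One \<inter> {x. x \<bullet> k \<le> 1 - h}) (\<lambda>x. g (x + h *\<^sub>R k)) =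
             integral (cbox 0 (One - h *\<^sub>R k)) (\<lambda>x. g (x + h *\<^sub>R k))"
    using lo_eq[of "1 - h" j] h unfolding k_def by simp
  also have "\<dots> = integral (cbox (h *\<^sub>R k) One) g"
    using int_shift[OF cont, of 0 "One - h *\<^sub>R k" "h *\<^sub>R k"] by simp
  also have "\<dots> = integral (cbox 0 One \<inter> {x. x \<bullet> k \<ge> h}) g"
    using hi_eq[of h j] h unfolding k_def by simp
  also have "integral (cbox 0 One \<inter> {x. x \<bullet> k \<ge> 1 - h}) (\<lambda>x. g (x + h *\<^sub>R k)) =
             integral (cbox ((1 - h) *\<^sub>R k) One) (\<lambda>x. g (x + (h - 1) *\<^sub>R k))"
    using hi_eq[of "1 - h" j] h unfolding k_def per'[unfolded k_def] by simp
  also have "\<dots> = integral (cbox ((1 - h) *\<^sub>R k + (h - 1) *\<^sub>R k) (One + (h - 1) *\<^sub>R k)) g"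
    by (rule int_shift[OF cont])
  also have "(1 - h) *\<^sub>R k + (h - 1) *\<^sub>R k = 0" by (simp add: algebra_simps)
  also have "One + (h - 1) *\<^sub>R k = One - (1 - h) *\<^sub>R k" by (simp add: algebra_simps)
  also have "integral (cbox 0 (One - (1 - h) *\<^sub>R k)) g = integral (cbox 0 One \<inter> {x. x \<bullet> k \<le> h}) g"
    using lo_eq[of h j] h unfolding k_def by simp
  also have "integral (cbox 0 One \<inter> {x. h \<le> x \<bullet> k}) g + integral (cbox 0 One \<inter> {x. x \<bullet> k \<le> h}) g
      = integral (cbox 0 One) g"
    using integral_split[OF intg kB, of h] by simp
  finally show ?thesis unfolding k_def .
qed

lemma torus_dd_zero:
  fixes K :: "real \<times> (real^'n::finite) \<Rightarrow> real"
  assumes sm: "smooth_on ({a<..<b} \<times> UNIV) K" and per: "per a b K" and t: "t \<in> {a<..<b}"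
  shows "integral (cbox 0 One) (\<lambda>x. dd K (Ej j) (t, x)) = 0"
proof -
  define k :: "real^'n" where "k = axis j 1"
  let ?U = "{-1<..<(1::real)}"
  have O: "open ({a<..<b} \<times> (UNIV :: (real^'n) set))" by simp
  have contK: "continuous_on ({a<..<b} \<times> UNIV) K" using sm_cont[OF sm] .
  have contg: "continuous_on UNIV (\<lambda>x. K (t, x))"
    by (rule continuous_on_compose2[OF contK]) (use t in \<open>auto intro!: continuous_intros\<close>)
  have perg: "K (t, x + k) = K (t, x)" for x using per t unfolding per_def k_def by auto
  define \<Phi> where "\<Phi> h = integral (cbox 0 One) (\<lambda>x. K (t, x + h *\<^sub>R k))" for h
  have const: "\<Phi> h = integral (cbox 0 One) (\<lambda>x. K (t, x))" if "h \<in> ?U" for h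
  proof (cases "h \<ge> 0")
    case True then show ?thesis unfolding \<Phi>_def k_def
      using trans_inv[OF contg, of j h] perg[unfolded k_def] that by simp
  next
    case False
    have "K (t, x + h *\<^sub>R k) = K (t, x + (h + 1) *\<^sub>R k)" for x
    proof -
      have "K (t, x + h *\<^sub>R k) = K (t, x + h *\<^sub>R k + k)" by (simp add: perg)
      also have "x + h *\<^sub>R k + k = x + (h + 1) *\<^sub>R k" by (simp add: algebra_simps)
      finally show ?thesis .
    qed
    then show ?thesis unfolding \<Phi>_def k_def
      using trans_inv[OF contg, of j "h + 1"] perg[unfolded k_def] that False by simp
  qed
  have D: "(\<Phi> has_field_derivative integral (cbox 0 One) (\<lambda>x. dd K (Ej j) (t, x + 0 *\<^sub>R k))) (at 0 within ?U)"
    unfolding \<Phi>_def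
  proof (rule leibniz_rule_field_derivative[where fx="\<lambda>h x. dd K (Ej j) (t, x + h *\<^sub>R k)"])
    fix h x assume "h \<in> ?U" "x \<in> cbox (0::real^'n) One"
    have "K differentiable (at ((t, x) + h *\<^sub>R Ej j))" using sm_diffat[OF O sm] t by (simp add: Ej_shift)
    from line_deriv[OF this, of ?U]
    show "((\<lambda>h. K (t, x + h *\<^sub>R k)) has_field_derivative dd K (Ej j) (t, x + h *\<^sub>R k)) (at h within ?U)"
      by (simp add: Ej_shift k_def)
  next
    fix h :: real
    have "continuous_on UNIV (\<lambda>x. K (t, x + h *\<^sub>R k))"
      by (rule continuous_on_compose2[OF contg]) (auto intro!: continuous_intros)
    then show "(\<lambda>x. K (t, x + h *\<^sub>R k)) integrable_on cbox 0 One"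
      by (intro integrable_continuous) (auto intro: continuous_on_subset)
  next
    have c: "continuous_on ({a<..<b} \<times> UNIV) (dd K (Ej j))" using sm_cont[OF sm_dd[OF sm]] .
    have "continuous_on (?U \<times> cbox 0 One) (\<lambda>y. dd K (Ej j) ((\<lambda>(h, x). (t, x + h *\<^sub>R k)) y))"
      by (rule continuous_on_compose2[OF c]) (use t in \<open>auto simp: split_beta intro!: continuous_intros\<close>)
    then show "continuous_on (?U \<times> cbox 0 One) (\<lambda>(h, x). dd K (Ej j) (t, x + h *\<^sub>R k))"
      by (simp add: split_beta)
  qed auto
  then have D': "(\<Phi> has_field_derivative integral (cbox 0 One) (\<lambda>x. dd K (Ej j) (t, x))) (at 0)"
    by (simp add: at_within_open[of 0 ?U])
  have "((\<lambda>h. integral (cbox 0 One) (\<lambda>x. K (t, x))) has_field_derivative 0) (at 0)" by simp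
  then have D0: "(\<Phi> has_field_derivative 0) (at 0)"
    by (rule has_field_derivative_transform_within_open[of _ _ _ ?U]) (use const in auto)
  show ?thesis using DERIV_unique[OF D' D0] .
qed

definition SMP :: "real \<Rightarrow> real \<Rightarrow> (real \<times> (real^'n::finite) \<Rightarrow> real) \<Rightarrow> bool" where
  "SMP a b K \<longleftrightarrow> smooth_on ({a<..<b} \<times> UNIV) K \<and> per a b K"

definition Itg :: "real \<Rightarrow> (real \<times> (real^'n::finite) \<Rightarrow> real) \<Rightarrow> real" where
  "Itg t K = integral (cbox 0 One) (\<lambda>x. K (t, x))"

lemma SMP_const[simp]: "SMP a b (\<lambda>p. c)" by (simp add: SMP_def)
lemma SMP_add[simp]: "SMP a b f \<Longrightarrow> SMP a b g \<Longrightarrow> SMP a b (\<lambda>p. f p + g p)" by (simp add: SMP_def)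
lemma SMP_diff[simp]: "SMP a b f \<Longrightarrow> SMP a b g \<Longrightarrow> SMP a b (\<lambda>p. f p - g p)" by (simp add: SMP_def)
lemma SMP_mult[simp]: "SMP a b f \<Longrightarrow> SMP a b g \<Longrightarrow> SMP a b (\<lambda>p. f p * g p)" by (simp add: SMP_def)
lemma SMP_minus[simp]: "SMP a b f \<Longrightarrow> SMP a b (\<lambda>p. - f p)" by (simp add: SMP_def)
lemma SMP_power[simp]: "SMP a b f \<Longrightarrow> SMP a b (\<lambda>p. f p ^ n)" by (simp add: SMP_def)
lemma SMP_sum[simp]: "(\<And>i. SMP a b (f i)) \<Longrightarrow> SMP a b (\<lambda>p. \<Sum>i\<in>I. f i p)" by (simp add: SMP_def)
lemma SMP_dd[simp]: "SMP a b f \<Longrightarrow> SMP a b (dd f v)" by (simp add: SMP_def)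
lemma SMP_ln: "SMP a b f \<Longrightarrow> (\<And>p. p \<in> {a<..<b} \<times> UNIV \<Longrightarrow> f p > 0) \<Longrightarrow> SMP a b (\<lambda>p. ln (f p))"
  unfolding SMP_def by (auto intro!: sm_ln)

lemma SMP_diffat: "SMP a b f \<Longrightarrow> p \<in> {a<..<b} \<times> UNIV \<Longrightarrow> f differentiable (at p)"
  unfolding SMP_def by (auto intro: sm_diffat[OF open_Om])

lemma SMP_cont: "SMP a b f \<Longrightarrow> continuous_on ({a<..<b} \<times> UNIV) f"
  unfolding SMP_def by (auto intro: sm_cont)

lemma SMP_int: "SMP a b K \<Longrightarrow> t \<in> {a<..<b} \<Longrightarrow> (\<lambda>x. K (t, x)) integrable_on cbox 0 One"
proof -
  assume K: "SMP a b K" and t: "t \<in> {a<..<b}"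
  have "continuous_on UNIV (\<lambda>x. K (t, x))"
    by (rule continuous_on_compose2[OF SMP_cont[OF K]]) (use t in \<open>auto intro!: continuous_intros\<close>)
  then show ?thesis by (intro integrable_continuous) (auto intro: continuous_on_subset)
qed

context
  fixes a b t :: real
  assumes t: "t \<in> {a<..<b}"
begin

lemma Itg_add[simp]: "SMP a b f \<Longrightarrow> SMP a b g \<Longrightarrow> Itg t (\<lambda>p. f p + g p) = Itg t f + Itg t g"
  unfolding Itg_def using t by (intro integral_add SMP_int) auto

lemma Itg_diff[simp]: "SMP a b f \<Longrightarrow> SMP a b g \<Longrightarrow> Itg t (\<lambda>p. f p - g p) = Itg t f - Itg t g"
  unfolding Itg_def using t by (intro integral_diff SMP_int) auto

lemma Itg_minus[simp]: "Itg t (\<lambda>p. - f p) = - Itg t f"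
  unfolding Itg_def by (simp add: integral_neg)

lemma Itg_cmult[simp]: "Itg t (\<lambda>p. c * f p) = c * Itg t f"
  unfolding Itg_def by simp

lemma Itg_sum[simp]: "finite I \<Longrightarrow> (\<And>i. SMP a b (f i)) \<Longrightarrow> Itg t (\<lambda>p. \<Sum>i\<in>I. f i p) = (\<Sum>i\<in>I. Itg t (f i))"
  unfolding Itg_def using t by (intro integral_sum SMP_int) auto

lemma Itg_cong: "(\<And>x. f (t, x) = g (t, x)) \<Longrightarrow> Itg t f = Itg t g"
  unfolding Itg_def by simp

lemma Itg_eq0: "(\<And>x. f (t, x) = 0) \<Longrightarrow> Itg t f = 0"
  unfolding Itg_def by simp

lemma Itg_ibp: "SMP a b F \<Longrightarrow> SMP a b G \<Longrightarrow> Itg t (\<lambda>p. F p * dd G (Ej j) p) = - Itg t (\<lambda>p. dd F (Ej j) p * G p)"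
proof -
  assume F: "SMP a b F" and G: "SMP a b G"
  have "Itg t (dd (\<lambda>p. F p * G p) (Ej j)) = 0"
    unfolding Itg_def using F G t by (intro torus_dd_zero[of a b]) (auto simp: SMP_def)
  moreover have "Itg t (dd (\<lambda>p. F p * G p) (Ej j)) = Itg t (\<lambda>p. F p * dd G (Ej j) p + dd F (Ej j) p * G p)"
    using t by (intro Itg_cong dd_mult SMP_diffat[OF F] SMP_diffat[OF G]) auto
  ultimately show ?thesis using F G by simp
qed

end

locale core =
  fixes a b t :: real and R :: "real \<times> (real^'n::finite) \<Rightarrow> real" and U :: "'n \<Rightarrow> real \<times> (real^'n) \<Rightarrow> real"
    and \<nu> \<kappa> :: real
  assumes t: "t \<in> {a<..<b}" and R: "SMP a b R" and U: "\<And>i. SMP a b (U i)"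
    and pos: "\<And>p. p \<in> {a<..<b} \<times> UNIV \<Longrightarrow> R p > 0"
    and mass: "\<And>p. p \<in> {a<..<b} \<times> UNIV \<Longrightarrow> dd R E0 p + (\<Sum>j\<in>UNIV. dd (\<lambda>q. R q * U j q) (Ej j) p) = 0"
    and mom: "\<And>p i. p \<in> {a<..<b} \<times> UNIV \<Longrightarrow> dd (\<lambda>q. R q * U i q) E0 p
        + (\<Sum>j\<in>UNIV. dd (\<lambda>q. R q * U i q * U j q) (Ej j) p)
        - 2 * \<nu> * (\<Sum>j\<in>UNIV. dd (\<lambda>q. R q * ((dd (U i) (Ej j) q + dd (U j) (Ej i) q) / 2)) (Ej j) p)
        = \<kappa> * R p * dd (\<lambda>q. \<Sum>k\<in>UNIV. dd (dd R (Ej k)) (Ej k) q) (Ej i) p"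

context core
begin

abbreviation "Om \<equiv> {a<..<b} \<times> (UNIV :: (real^'n) set)"
abbreviation "L \<equiv> \<lambda>q. ln (R q)"
definition "C = (\<lambda>p. \<Sum>j\<in>UNIV. dd L (Ej j) p * U j p + dd (U j) (Ej j) p)"

lemma ddR_add[simp]: "SMP a b f \<Longrightarrow> SMP a b g \<Longrightarrow> p \<in> Om \<Longrightarrow> dd (\<lambda>x. f x + g x) v p = dd f v p + dd g v p"
  by (intro dd_add SMP_diffat)
lemma ddR_diff[simp]: "SMP a b f \<Longrightarrow> SMP a b g \<Longrightarrow> p \<in> Om \<Longrightarrow> dd (\<lambda>x. f x - g x) v p = dd f v p - dd g v p"
  by (intro dd_diff SMP_diffat)
lemma ddR_mult[simp]: "SMP a b f \<Longrightarrow> SMP a b g \<Longrightarrow> p \<in> Om \<Longrightarrow> dd (\<lambda>x. f x * g x) v p = f p * dd g v p + dd f v p * g p"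
  by (intro dd_mult SMP_diffat)
lemma ddR_minus[simp]: "SMP a b f \<Longrightarrow> p \<in> Om \<Longrightarrow> dd (\<lambda>x. - f x) v p = - dd f v p"
  by (intro dd_minus SMP_diffat)
lemma ddR_power2[simp]: "SMP a b f \<Longrightarrow> p \<in> Om \<Longrightarrow> dd (\<lambda>x. (f x)^2) v p = 2 * f p * dd f v p"
  by (intro dd_power2 SMP_diffat)
lemma ddR_sum[simp]: "(\<And>i. SMP a b (f i)) \<Longrightarrow> p \<in> Om \<Longrightarrow> dd (\<lambda>x. \<Sum>i\<in>I. f i x) v p = (\<Sum>i\<in>I. dd (f i) v p)"
  by (intro dd_sum SMP_diffat)

lemma schwarzR: "SMP a b f \<Longrightarrow> p \<in> Om \<Longrightarrow> dd (dd f v) w p = dd (dd f w) v p"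
  unfolding SMP_def by (intro schwarz[of "{a<..<b} \<times> UNIV"]) auto

lemma tt[simp]: "a < t" "t < b" using t by auto
lemma SMP_divide[simp]: "SMP a b f \<Longrightarrow> SMP a b (\<lambda>p. f p / c)"
  using SMP_mult[of a b "\<lambda>p. 1/c" f] by simp
lemma Itg_div[simp]: "Itg t (\<lambda>p. f p / c) = Itg t f / c" using Itg_cmult[OF t, of "1/c" f] by simp
lemmas Itg_simps[simp] = Itg_add[OF t] Itg_diff[OF t] Itg_cmult[OF t] Itg_minus[OF t] Itg_sum[OF t]
lemma RU[simp]: "SMP a b R" "SMP a b (U i)" using R U by auto

lemma SMP_L[simp]: "SMP a b L" using SMP_ln[OF R pos] by simp
lemma SMP_C[simp]: "SMP a b C" by (simp add: C_def)

lemma ddR_L: "p \<in> Om \<Longrightarrow> dd R v p = R p * dd L v p"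
proof -
  assume p: "p \<in> Om"
  have "dd L v p = dd R v p * inverse (R p)" by (rule dd_ln[OF SMP_diffat[OF R p] pos[OF p]])
  then show ?thesis using pos[OF p] by (simp add: field_simps)
qed

lemma schwL: "p \<in> Om \<Longrightarrow> dd (dd L v) w p = dd (dd L w) v p" by (rule schwarzR[OF SMP_L])
lemma schwR: "p \<in> Om \<Longrightarrow> dd (dd R v) w p = dd (dd R w) v p" by (rule schwarzR[OF R])
lemma schwU: "p \<in> Om \<Longrightarrow> dd (dd (U k) v) w p = dd (dd (U k) w) v p" by (rule schwarzR[OF U])

lemma rt: "p \<in> Om \<Longrightarrow> dd R E0 p = - R p * C p"
proof -
  assume p: "p \<in> Om"
  have "dd R E0 p = - (\<Sum>j\<in>UNIV. dd (\<lambda>q. R q * U j q) (Ej j) p)" using mass[OF p] by linarith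
  also have "\<dots> = - R p * C p" using p by (simp add: C_def ddR_L sum_distrib_left algebra_simps sum.distrib sum_subtractf sum_negf)
  finally show ?thesis .
qed

lemma Lt: "p \<in> Om \<Longrightarrow> dd L E0 p = - C p"
proof -
  assume p: "p \<in> Om"
  have "dd L E0 p = dd R E0 p * inverse (R p)" by (rule dd_ln[OF SMP_diffat[OF R p] pos[OF p]])
  then show ?thesis using pos[OF p] by (simp add: rt[OF p])
qed

lemma Lti1: "p \<in> Om \<Longrightarrow> dd (dd L E0) w p = - dd C w p"
proof -
  assume p: "p \<in> Om"
  have "dd (dd L E0) w p = dd (\<lambda>q. - C q) w p"
    by (rule dd_cong_open[of Om]) (use p Lt SMP_diffat[OF SMP_dd[OF SMP_L] p] in auto)
  also have "\<dots> = - dd C w p" using p by (simp del: ddR_sum)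
  finally show ?thesis .
qed

lemma Lti2: "p \<in> Om \<Longrightarrow> dd (dd L w) E0 p = - dd C w p"
  using Lti1 schwarzR[OF SMP_L] by metis

lemma partE:
  "Itg t (dd (\<lambda>p. \<nu>^2 * R p * (\<Sum>i\<in>UNIV. (dd L (Ej i) p)^2)) E0) =
   2 * \<nu>^2 * (\<Sum>i\<in>UNIV. \<Sum>j\<in>UNIV. Itg t (\<lambda>p. dd (dd L (Ej i)) (Ej j) p * (R p * ((dd (U i) (Ej j) p + dd (U j) (Ej i) p) / 2))))"
proof -
  have E1: "Itg t (dd (\<lambda>p. \<nu>^2 * R p * (\<Sum>i\<in>UNIV. (dd L (Ej i) p)^2)) E0) =
     Itg t (\<lambda>p. \<nu>^2 * (- (\<Sum>i\<in>UNIV. R p * C p * (dd L (Ej i) p)^2) - 2 * (\<Sum>i\<in>UNIV. R p * dd L (Ej i) p * dd C (Ej i) p)))"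
    by (rule Itg_cong[OF t]) (simp add: rt Lti1 Lti2 sum_distrib_left sum_negf algebra_simps sum.distrib sum_subtractf)
  have E1': "Itg t (dd (\<lambda>p. \<nu>^2 * R p * (\<Sum>i\<in>UNIV. (dd L (Ej i) p)^2)) E0) =
     \<nu>^2 * (- (\<Sum>i\<in>UNIV. Itg t (\<lambda>p. R p * C p * (dd L (Ej i) p)^2)) - 2 * (\<Sum>i\<in>UNIV. Itg t (\<lambda>p. R p * dd L (Ej i) p * dd C (Ej i) p)))"
    unfolding E1 by (simp add: Itg_sum[OF t] Itg_diff[OF t] Itg_cmult[OF t] Itg_minus[OF t])
  have E2: "Itg t (\<lambda>p. R p * C p * (dd L (Ej i) p)^2) = - 2 * (\<Sum>j\<in>UNIV. Itg t (\<lambda>p. R p * dd L (Ej i) p * dd (dd L (Ej i)) (Ej j) p * U j p))" for i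
  proof -
    have ibp: "Itg t (\<lambda>p. (R p * U j p) * dd (\<lambda>q. (dd L (Ej i) q)^2) (Ej j) p) = - Itg t (\<lambda>p. dd (\<lambda>q. R q * U j q) (Ej j) p * (dd L (Ej i) p)^2)" for j
      by (rule Itg_ibp[OF t]) simp_all
    have l: "Itg t (\<lambda>p. (R p * U j p) * dd (\<lambda>q. (dd L (Ej i) q)^2) (Ej j) p) = 2 * Itg t (\<lambda>p. R p * dd L (Ej i) p * dd (dd L (Ej i)) (Ej j) p * U j p)" for j
    proof -
      have "Itg t (\<lambda>p. (R p * U j p) * dd (\<lambda>q. (dd L (Ej i) q)^2) (Ej j) p) = Itg t (\<lambda>p. 2 * (R p * dd L (Ej i) p * dd (dd L (Ej i)) (Ej j) p * U j p))"
        by (rule Itg_cong[OF t]) (simp add: algebra_simps)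
      then show ?thesis by simp
    qed
    have r: "Itg t (\<lambda>p. dd (\<lambda>q. R q * U j q) (Ej j) p * (dd L (Ej i) p)^2) = Itg t (\<lambda>p. R p * (dd L (Ej j) p * U j p + dd (U j) (Ej j) p) * (dd L (Ej i) p)^2)" for j
      by (rule Itg_cong[OF t]) (simp add: ddR_L algebra_simps)
    have "Itg t (\<lambda>p. R p * C p * (dd L (Ej i) p)^2) = Itg t (\<lambda>p. \<Sum>j\<in>UNIV. R p * (dd L (Ej j) p * U j p + dd (U j) (Ej j) p) * (dd L (Ej i) p)^2)"
      by (rule Itg_cong[OF t]) (simp add: C_def sum_distrib_left sum_distrib_right)
    also have "\<dots> = (\<Sum>j\<in>UNIV. Itg t (\<lambda>p. R p * (dd L (Ej j) p * U j p + dd (U j) (Ej j) p) * (dd L (Ej i) p)^2))"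
      by (rule Itg_sum[OF t]) simp_all
    also have "\<dots> = (\<Sum>j\<in>UNIV. - 2 * Itg t (\<lambda>p. R p * dd L (Ej i) p * dd (dd L (Ej i)) (Ej j) p * U j p))"
    proof (rule sum.cong[OF refl])
      fix j show "Itg t (\<lambda>p. R p * (dd L (Ej j) p * U j p + dd (U j) (Ej j) p) * (dd L (Ej i) p)^2) = - 2 * Itg t (\<lambda>p. R p * dd L (Ej i) p * dd (dd L (Ej i)) (Ej j) p * U j p)"
        using ibp[of j] l[of j] r[of j] by linarith
    qed
    finally show ?thesis by (simp add: sum_distrib_left)
  qed
  have E3: "Itg t (\<lambda>p. R p * dd L (Ej i) p * dd C (Ej i) p) =
     (\<Sum>j\<in>UNIV. Itg t (\<lambda>p. R p * dd L (Ej i) p * dd L (Ej j) p * dd (U j) (Ej i) p))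
   + (\<Sum>j\<in>UNIV. Itg t (\<lambda>p. R p * dd L (Ej i) p * dd (dd L (Ej i)) (Ej j) p * U j p))
   + Itg t (\<lambda>p. R p * dd L (Ej i) p * (\<Sum>j\<in>UNIV. dd (dd (U j) (Ej j)) (Ej i) p))" for i
  proof -
    have "Itg t (\<lambda>p. R p * dd L (Ej i) p * dd C (Ej i) p) =
      Itg t (\<lambda>p. (\<Sum>j\<in>UNIV. R p * dd L (Ej i) p * dd L (Ej j) p * dd (U j) (Ej i) p)
        + (\<Sum>j\<in>UNIV. R p * dd L (Ej i) p * dd (dd L (Ej i)) (Ej j) p * U j p)
        + R p * dd L (Ej i) p * (\<Sum>j\<in>UNIV. dd (dd (U j) (Ej j)) (Ej i) p))"
      by (rule Itg_cong[OF t]) (simp add: C_def schwL sum_distrib_left sum.distrib algebra_simps)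
    then show ?thesis by simp
  qed
  let ?Z = "\<Sum>i\<in>UNIV. \<Sum>j\<in>UNIV. Itg t (\<lambda>p. dd (dd L (Ej i)) (Ej j) p * (R p * ((dd (U i) (Ej j) p + dd (U j) (Ej i) p) / 2)))"
  have Z1: "Itg t (\<lambda>p. dd (dd L (Ej i)) (Ej j) p * (R p * ((dd (U i) (Ej j) p + dd (U j) (Ej i) p) / 2)))
     = (1/2) * Itg t (\<lambda>p. dd (dd L (Ej i)) (Ej j) p * R p * dd (U i) (Ej j) p) + (1/2) * Itg t (\<lambda>p. dd (dd L (Ej i)) (Ej j) p * R p * dd (U j) (Ej i) p)" for i j
  proof -
    have "Itg t (\<lambda>p. dd (dd L (Ej i)) (Ej j) p * (R p * ((dd (U i) (Ej j) p + dd (U j) (Ej i) p) / 2)))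
      = Itg t (\<lambda>p. (1/2) * (dd (dd L (Ej i)) (Ej j) p * R p * dd (U i) (Ej j) p) + (1/2) * (dd (dd L (Ej i)) (Ej j) p * R p * dd (U j) (Ej i) p))"
      by (rule Itg_cong[OF t]) (simp add: algebra_simps)
    then show ?thesis by simp
  qed
  have Z2: "(\<Sum>i\<in>UNIV. \<Sum>j\<in>UNIV. Itg t (\<lambda>p. dd (dd L (Ej i)) (Ej j) p * R p * dd (U j) (Ej i) p))
      = (\<Sum>i\<in>UNIV. \<Sum>j\<in>UNIV. Itg t (\<lambda>p. dd (dd L (Ej i)) (Ej j) p * R p * dd (U i) (Ej j) p))"
  proof -
    have "(\<Sum>i\<in>UNIV. \<Sum>j\<in>UNIV. Itg t (\<lambda>p. dd (dd L (Ej i)) (Ej j) p * R p * dd (U j) (Ej i) p))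
      = (\<Sum>j\<in>UNIV. \<Sum>i\<in>UNIV. Itg t (\<lambda>p. dd (dd L (Ej i)) (Ej j) p * R p * dd (U j) (Ej i) p))"
      by (rule sum.swap)
    also have "\<dots> = (\<Sum>j\<in>UNIV. \<Sum>i\<in>UNIV. Itg t (\<lambda>p. dd (dd L (Ej j)) (Ej i) p * R p * dd (U j) (Ej i) p))"
      by (intro sum.cong refl Itg_cong[OF t]) (simp add: schwL)
    finally show ?thesis .
  qed
  have Zs: "?Z = (\<Sum>i\<in>UNIV. \<Sum>j\<in>UNIV. Itg t (\<lambda>p. dd (dd L (Ej i)) (Ej j) p * R p * dd (U i) (Ej j) p))"
    unfolding Z1 sum.distrib sum_distrib_left[symmetric] Z2 by simp
  have E5: "Itg t (\<lambda>p. dd (dd L (Ej i)) (Ej j) p * R p * dd (U i) (Ej j) p) =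
      - Itg t (\<lambda>p. R p * dd L (Ej j) p * dd (dd (U i) (Ej i)) (Ej j) p) - Itg t (\<lambda>p. R p * dd L (Ej i) p * dd L (Ej j) p * dd (U i) (Ej j) p)" for i j
  proof -
    have ibp: "Itg t (\<lambda>p. (R p * dd (U i) (Ej j) p) * dd (dd L (Ej j)) (Ej i) p) = - Itg t (\<lambda>p. dd (\<lambda>q. R q * dd (U i) (Ej j) q) (Ej i) p * dd L (Ej j) p)"
      by (rule Itg_ibp[OF t]) simp_all
    have l: "Itg t (\<lambda>p. (R p * dd (U i) (Ej j) p) * dd (dd L (Ej j)) (Ej i) p) = Itg t (\<lambda>p. dd (dd L (Ej i)) (Ej j) p * R p * dd (U i) (Ej j) p)"
      by (rule Itg_cong[OF t]) (simp add: schwL)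
    have r: "Itg t (\<lambda>p. dd (\<lambda>q. R q * dd (U i) (Ej j) q) (Ej i) p * dd L (Ej j) p) =
       Itg t (\<lambda>p. R p * dd L (Ej j) p * dd (dd (U i) (Ej i)) (Ej j) p + R p * dd L (Ej i) p * dd L (Ej j) p * dd (U i) (Ej j) p)"
      by (rule Itg_cong[OF t]) (simp add: ddR_L schwU[of _ i "Ej j" "Ej i"] algebra_simps)
    show ?thesis using ibp l r by simp
  qed
  have Zf: "?Z = - (\<Sum>j\<in>UNIV. Itg t (\<lambda>p. R p * dd L (Ej j) p * (\<Sum>i\<in>UNIV. dd (dd (U i) (Ej i)) (Ej j) p)))
     - (\<Sum>i\<in>UNIV. \<Sum>j\<in>UNIV. Itg t (\<lambda>p. R p * dd L (Ej i) p * dd L (Ej j) p * dd (U i) (Ej j) p))"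
  proof -
    have "(\<Sum>i\<in>UNIV. \<Sum>j\<in>UNIV. Itg t (\<lambda>p. R p * dd L (Ej j) p * dd (dd (U i) (Ej i)) (Ej j) p))
       = (\<Sum>j\<in>UNIV. \<Sum>i\<in>UNIV. Itg t (\<lambda>p. R p * dd L (Ej j) p * dd (dd (U i) (Ej i)) (Ej j) p))"
      by (rule sum.swap)
    also have "\<dots> = (\<Sum>j\<in>UNIV. Itg t (\<lambda>p. R p * dd L (Ej j) p * (\<Sum>i\<in>UNIV. dd (dd (U i) (Ej i)) (Ej j) p)))"
    proof (rule sum.cong[OF refl])
      fix j
      have "Itg t (\<lambda>p. R p * dd L (Ej j) p * (\<Sum>i\<in>UNIV. dd (dd (U i) (Ej i)) (Ej j) p))
          = Itg t (\<lambda>p. \<Sum>i\<in>UNIV. R p * dd L (Ej j) p * dd (dd (U i) (Ej i)) (Ej j) p)"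
        by (rule Itg_cong[OF t]) (simp add: sum_distrib_left)
      then show "(\<Sum>i\<in>UNIV. Itg t (\<lambda>p. R p * dd L (Ej j) p * dd (dd (U i) (Ej i)) (Ej j) p)) = Itg t (\<lambda>p. R p * dd L (Ej j) p * (\<Sum>i\<in>UNIV. dd (dd (U i) (Ej i)) (Ej j) p))"
        by simp
    qed
    finally have A: "(\<Sum>i\<in>UNIV. \<Sum>j\<in>UNIV. Itg t (\<lambda>p. R p * dd L (Ej j) p * dd (dd (U i) (Ej i)) (Ej j) p))
       = (\<Sum>j\<in>UNIV. Itg t (\<lambda>p. R p * dd L (Ej j) p * (\<Sum>i\<in>UNIV. dd (dd (U i) (Ej i)) (Ej j) p)))" .
    show ?thesis unfolding Zs E5 sum_subtractf sum_negf A by simp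
  qed
  have W: "(\<Sum>i\<in>UNIV. \<Sum>j\<in>UNIV. Itg t (\<lambda>p. R p * dd L (Ej i) p * dd L (Ej j) p * dd (U j) (Ej i) p))
      = (\<Sum>i\<in>UNIV. \<Sum>j\<in>UNIV. Itg t (\<lambda>p. R p * dd L (Ej i) p * dd L (Ej j) p * dd (U i) (Ej j) p))"
  proof -
    have "(\<Sum>i\<in>UNIV. \<Sum>j\<in>UNIV. Itg t (\<lambda>p. R p * dd L (Ej i) p * dd L (Ej j) p * dd (U j) (Ej i) p))
       = (\<Sum>j\<in>UNIV. \<Sum>i\<in>UNIV. Itg t (\<lambda>p. R p * dd L (Ej i) p * dd L (Ej j) p * dd (U j) (Ej i) p))"
      by (rule sum.swap)
    also have "\<dots> = (\<Sum>j\<in>UNIV. \<Sum>i\<in>UNIV. Itg t (\<lambda>p. R p * dd L (Ej j) p * dd L (Ej i) p * dd (U j) (Ej i) p))"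
      by (intro sum.cong refl Itg_cong[OF t]) (simp add: algebra_simps)
    finally show ?thesis .
  qed
  have S1: "(\<Sum>i\<in>UNIV. Itg t (\<lambda>p. R p * C p * (dd L (Ej i) p)^2)) = - 2 * (\<Sum>i\<in>UNIV. \<Sum>j\<in>UNIV. Itg t (\<lambda>p. R p * dd L (Ej i) p * dd (dd L (Ej i)) (Ej j) p * U j p))"
    unfolding E2 sum_distrib_left[symmetric] ..
  have S2: "(\<Sum>i\<in>UNIV. Itg t (\<lambda>p. R p * dd L (Ej i) p * dd C (Ej i) p)) =
     (\<Sum>i\<in>UNIV. \<Sum>j\<in>UNIV. Itg t (\<lambda>p. R p * dd L (Ej i) p * dd L (Ej j) p * dd (U j) (Ej i) p))
   + (\<Sum>i\<in>UNIV. \<Sum>j\<in>UNIV. Itg t (\<lambda>p. R p * dd L (Ej i) p * dd (dd L (Ej i)) (Ej j) p * U j p))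
   + (\<Sum>i\<in>UNIV. Itg t (\<lambda>p. R p * dd L (Ej i) p * (\<Sum>j\<in>UNIV. dd (dd (U j) (Ej j)) (Ej i) p)))"
    unfolding E3 sum.distrib ..
  show ?thesis
    unfolding E1' S1 S2 Zf W[symmetric] by (simp add: algebra_simps)
qed

end

context core
begin

lemma partF:
  "Itg t (dd (\<lambda>p. \<nu> * (\<Sum>i\<in>UNIV. U i p * dd R (Ej i) p)) E0) =
   \<nu> * ((\<Sum>i\<in>UNIV. \<Sum>j\<in>UNIV. Itg t (\<lambda>p. dd (dd L (Ej i)) (Ej j) p * (R p * U i p * U j p)))
      - 2 * \<nu> * (\<Sum>i\<in>UNIV. \<Sum>j\<in>UNIV. Itg t (\<lambda>p. dd (dd L (Ej i)) (Ej j) p * (R p * ((dd (U i) (Ej j) p + dd (U j) (Ej i) p) / 2))))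
      - \<kappa> * (\<Sum>i\<in>UNIV. \<Sum>k\<in>UNIV. Itg t (\<lambda>p. (dd (dd R (Ej i)) (Ej k) p)^2))
      + Itg t (\<lambda>p. R p * C p * C p))"
proof -
  let ?M = "\<lambda>i p. dd (\<lambda>q. R q * U i q) E0 p"
  have F1: "Itg t (dd (\<lambda>p. \<nu> * (\<Sum>i\<in>UNIV. U i p * dd R (Ej i) p)) E0) =
     Itg t (\<lambda>p. \<nu> * ((\<Sum>i\<in>UNIV. U i p * dd (dd R E0) (Ej i) p) + (\<Sum>i\<in>UNIV. ?M i p * dd L (Ej i) p) - (\<Sum>i\<in>UNIV. dd R E0 p * U i p * dd L (Ej i) p)))"
  proof (rule Itg_cong[OF t])
    fix x
    have p: "(t, x) \<in> Om" by simp
    have s: "dd (dd R (Ej i)) E0 (t, x) = dd (dd R E0) (Ej i) (t, x)" for i by (rule schwR[OF p])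
    show "dd (\<lambda>p. \<nu> * (\<Sum>i\<in>UNIV. U i p * dd R (Ej i) p)) E0 (t, x) =
      \<nu> * ((\<Sum>i\<in>UNIV. U i (t, x) * dd (dd R E0) (Ej i) (t, x)) + (\<Sum>i\<in>UNIV. ?M i (t, x) * dd L (Ej i) (t, x)) - (\<Sum>i\<in>UNIV. dd R E0 (t, x) * U i (t, x) * dd L (Ej i) (t, x)))"
      by (simp add: s ddR_L[OF p, of "Ej _"] algebra_simps sum.distrib sum_subtractf)
  qed
  have F1': "Itg t (dd (\<lambda>p. \<nu> * (\<Sum>i\<in>UNIV. U i p * dd R (Ej i) p)) E0) =
     \<nu> * ((\<Sum>i\<in>UNIV. Itg t (\<lambda>p. U i p * dd (dd R E0) (Ej i) p)) + (\<Sum>i\<in>UNIV. Itg t (\<lambda>p. ?M i p * dd L (Ej i) p)) - (\<Sum>i\<in>UNIV. Itg t (\<lambda>p. dd R E0 p * U i p * dd L (Ej i) p)))"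
    unfolding F1 by simp
  have Fa: "Itg t (\<lambda>p. U i p * dd (dd R E0) (Ej i) p) = - Itg t (\<lambda>p. dd (U i) (Ej i) p * dd R E0 p)" for i
    by (rule Itg_ibp[OF t]) simp_all
  have Fb: "- (\<Sum>i\<in>UNIV. Itg t (\<lambda>p. dd (U i) (Ej i) p * dd R E0 p)) - (\<Sum>i\<in>UNIV. Itg t (\<lambda>p. dd R E0 p * U i p * dd L (Ej i) p))
      = Itg t (\<lambda>p. R p * C p * C p)"
  proof -
    have "Itg t (\<lambda>p. R p * C p * C p) = Itg t (\<lambda>p. - (\<Sum>i\<in>UNIV. dd (U i) (Ej i) p * dd R E0 p + dd R E0 p * U i p * dd L (Ej i) p))"
    proof (rule Itg_cong[OF t])
      fix x
      have p: "(t, x) \<in> Om" by simp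
      have Cs: "C (t, x) = (\<Sum>i\<in>UNIV. dd (U i) (Ej i) (t, x) + U i (t, x) * dd L (Ej i) (t, x))"
        by (simp add: C_def algebra_simps)
      have "(\<Sum>i\<in>UNIV. dd (U i) (Ej i) (t, x) * dd R E0 (t, x) + dd R E0 (t, x) * U i (t, x) * dd L (Ej i) (t, x))
          = dd R E0 (t, x) * (\<Sum>i\<in>UNIV. dd (U i) (Ej i) (t, x) + U i (t, x) * dd L (Ej i) (t, x))"
        by (simp add: sum_distrib_left algebra_simps)
      also have "\<dots> = - R (t, x) * C (t, x) * C (t, x)" unfolding rt[OF p] Cs by simp
      finally show "R (t, x) * C (t, x) * C (t, x) = - (\<Sum>i\<in>UNIV. dd (U i) (Ej i) (t, x) * dd R E0 (t, x) + dd R E0 (t, x) * U i (t, x) * dd L (Ej i) (t, x))"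
        by simp
    qed
    then show ?thesis by (simp add: sum.distrib)
  qed
  let ?G1 = "\<lambda>i j q. R q * U i q * U j q"
  let ?G2 = "\<lambda>i j q. R q * ((dd (U i) (Ej j) q + dd (U j) (Ej i) q) / 2)"
  let ?Lap = "\<lambda>q. \<Sum>k\<in>UNIV. dd (dd R (Ej k)) (Ej k) q"
  have Fc: "Itg t (\<lambda>p. ?M i p * dd L (Ej i) p) =
      \<kappa> * Itg t (\<lambda>p. dd R (Ej i) p * dd ?Lap (Ej i) p)
    - (\<Sum>j\<in>UNIV. Itg t (\<lambda>p. dd L (Ej i) p * dd (?G1 i j) (Ej j) p))
    + 2 * \<nu> * (\<Sum>j\<in>UNIV. Itg t (\<lambda>p. dd L (Ej i) p * dd (?G2 i j) (Ej j) p))" for i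
  proof -
    have "Itg t (\<lambda>p. ?M i p * dd L (Ej i) p) =
      Itg t (\<lambda>p. \<kappa> * (dd R (Ej i) p * dd ?Lap (Ej i) p)
         - (\<Sum>j\<in>UNIV. dd L (Ej i) p * dd (?G1 i j) (Ej j) p)
         + 2 * \<nu> * (\<Sum>j\<in>UNIV. dd L (Ej i) p * dd (?G2 i j) (Ej j) p))"
    proof (rule Itg_cong[OF t])
      fix x
      have p: "(t, x) \<in> Om" by simp
      have e: "?M i (t, x) = \<kappa> * R (t, x) * dd ?Lap (Ej i) (t, x) - (\<Sum>j\<in>UNIV. dd (?G1 i j) (Ej j) (t, x))
          + 2 * \<nu> * (\<Sum>j\<in>UNIV. dd (?G2 i j) (Ej j) (t, x))"
        using mom[OF p, of i] by linarith
      show "?M i (t, x) * dd L (Ej i) (t, x) = \<kappa> * (dd R (Ej i) (t, x) * dd ?Lap (Ej i) (t, x))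
         - (\<Sum>j\<in>UNIV. dd L (Ej i) (t, x) * dd (?G1 i j) (Ej j) (t, x))
         + 2 * \<nu> * (\<Sum>j\<in>UNIV. dd L (Ej i) (t, x) * dd (?G2 i j) (Ej j) (t, x))"
        unfolding e ddR_L[OF p, of "Ej i"] sum_distrib_left[symmetric] by (simp only: algebra_simps)
    qed
    then show ?thesis by simp
  qed
  have Fd1: "Itg t (\<lambda>p. dd L (Ej i) p * dd (?G1 i j) (Ej j) p) = - Itg t (\<lambda>p. dd (dd L (Ej i)) (Ej j) p * (R p * U i p * U j p))" for i j
    by (rule Itg_ibp[OF t]) simp_all
  have Fd2: "Itg t (\<lambda>p. dd L (Ej i) p * dd (?G2 i j) (Ej j) p) = - Itg t (\<lambda>p. dd (dd L (Ej i)) (Ej j) p * (R p * ((dd (U i) (Ej j) p + dd (U j) (Ej i) p) / 2)))" for i j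
    by (rule Itg_ibp[OF t]) simp_all
  have Fe2: "Itg t (\<lambda>p. dd (dd R (Ej i)) (Ej i) p * dd (dd R (Ej k)) (Ej k) p) = Itg t (\<lambda>p. (dd (dd R (Ej i)) (Ej k) p)^2)" for i k
  proof -
    have i1: "Itg t (\<lambda>p. dd (dd R (Ej k)) (Ej k) p * dd (dd R (Ej i)) (Ej i) p) = - Itg t (\<lambda>p. dd (dd (dd R (Ej k)) (Ej k)) (Ej i) p * dd R (Ej i) p)"
      by (rule Itg_ibp[OF t]) simp_all
    have i2: "Itg t (\<lambda>p. dd R (Ej i) p * dd (dd (dd R (Ej k)) (Ej i)) (Ej k) p) = - Itg t (\<lambda>p. dd (dd R (Ej i)) (Ej k) p * dd (dd R (Ej k)) (Ej i) p)"
      by (rule Itg_ibp[OF t]) simp_all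
    have c1: "Itg t (\<lambda>p. dd (dd (dd R (Ej k)) (Ej k)) (Ej i) p * dd R (Ej i) p) = Itg t (\<lambda>p. dd R (Ej i) p * dd (dd (dd R (Ej k)) (Ej i)) (Ej k) p)"
    proof (rule Itg_cong[OF t])
      fix x
      have p: "(t, x) \<in> Om" by simp
      show "dd (dd (dd R (Ej k)) (Ej k)) (Ej i) (t, x) * dd R (Ej i) (t, x) = dd R (Ej i) (t, x) * dd (dd (dd R (Ej k)) (Ej i)) (Ej k) (t, x)"
        using schwarzR[OF SMP_dd[OF R] p, of "Ej k" "Ej k" "Ej i"] by simp
    qed
    have c2: "Itg t (\<lambda>p. dd (dd R (Ej i)) (Ej k) p * dd (dd R (Ej k)) (Ej i) p) = Itg t (\<lambda>p. (dd (dd R (Ej i)) (Ej k) p)^2)"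
    proof (rule Itg_cong[OF t])
      fix x
      have p: "(t, x) \<in> Om" by simp
      show "dd (dd R (Ej i)) (Ej k) (t, x) * dd (dd R (Ej k)) (Ej i) (t, x) = (dd (dd R (Ej i)) (Ej k) (t, x))^2"
        using schwR[OF p, of "Ej k" "Ej i"] by (simp add: power2_eq_square)
    qed
    have c0: "Itg t (\<lambda>p. dd (dd R (Ej i)) (Ej i) p * dd (dd R (Ej k)) (Ej k) p) = Itg t (\<lambda>p. dd (dd R (Ej k)) (Ej k) p * dd (dd R (Ej i)) (Ej i) p)"
      by (rule Itg_cong[OF t]) simp
    show ?thesis using c0 i1 c1 i2 c2 by simp
  qed
  have Fe: "Itg t (\<lambda>p. dd R (Ej i) p * dd ?Lap (Ej i) p) = - (\<Sum>k\<in>UNIV. Itg t (\<lambda>p. (dd (dd R (Ej i)) (Ej k) p)^2))" for i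
  proof -
    have "Itg t (\<lambda>p. dd R (Ej i) p * dd ?Lap (Ej i) p) = - Itg t (\<lambda>p. dd (dd R (Ej i)) (Ej i) p * ?Lap p)"
      by (rule Itg_ibp[OF t]) simp_all
    also have "Itg t (\<lambda>p. dd (dd R (Ej i)) (Ej i) p * ?Lap p) = Itg t (\<lambda>p. \<Sum>k\<in>UNIV. dd (dd R (Ej i)) (Ej i) p * dd (dd R (Ej k)) (Ej k) p)"
      by (rule Itg_cong[OF t]) (simp add: sum_distrib_left)
    also have "\<dots> = (\<Sum>k\<in>UNIV. Itg t (\<lambda>p. (dd (dd R (Ej i)) (Ej k) p)^2))"
      using Fe2 by simp
    finally show ?thesis .
  qed
  have SM: "(\<Sum>i\<in>UNIV. Itg t (\<lambda>p. ?M i p * dd L (Ej i) p)) =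
      (\<Sum>i\<in>UNIV. \<Sum>j\<in>UNIV. Itg t (\<lambda>p. dd (dd L (Ej i)) (Ej j) p * (R p * U i p * U j p)))
      - 2 * \<nu> * (\<Sum>i\<in>UNIV. \<Sum>j\<in>UNIV. Itg t (\<lambda>p. dd (dd L (Ej i)) (Ej j) p * (R p * ((dd (U i) (Ej j) p + dd (U j) (Ej i) p) / 2))))
      - \<kappa> * (\<Sum>i\<in>UNIV. \<Sum>k\<in>UNIV. Itg t (\<lambda>p. (dd (dd R (Ej i)) (Ej k) p)^2))"
    unfolding Fc Fd1 Fd2 Fe sum.distrib sum_subtractf sum_negf sum_distrib_left[symmetric]
    by (simp add: algebra_simps)
  show ?thesis unfolding F1' Fa SM sum_negf Fb[symmetric] by (simp add: algebra_simps)
qed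

end

context core
begin

lemma partII:
  "(\<Sum>i\<in>UNIV. \<Sum>j\<in>UNIV. Itg t (\<lambda>p. dd (dd L (Ej i)) (Ej j) p * (R p * U i p * U j p))) + Itg t (\<lambda>p. R p * C p * C p)
   = (\<Sum>i\<in>UNIV. \<Sum>j\<in>UNIV. Itg t (\<lambda>p. R p * dd (U i) (Ej j) p * dd (U j) (Ej i) p))"
proof -
  let ?A = "\<lambda>p. \<Sum>i\<in>UNIV. dd L (Ej i) p * U i p"
  let ?B = "\<lambda>p. \<Sum>i\<in>UNIV. dd (U i) (Ej i) p"
  let ?T = "\<lambda>p. \<Sum>i\<in>UNIV. \<Sum>j\<in>UNIV. dd L (Ej i) p * dd (U i) (Ej j) p * U j p"
  have Y1: "Itg t (\<lambda>p. dd (dd L (Ej i)) (Ej j) p * (R p * U i p * U j p)) =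
      - Itg t (\<lambda>p. R p * (U i p * dd (U j) (Ej j) p * dd L (Ej i) p + dd L (Ej i) p * dd (U i) (Ej j) p * U j p
              + dd L (Ej i) p * U i p * (dd L (Ej j) p * U j p)))" for i j
  proof -
    have ibp: "Itg t (\<lambda>p. (R p * U i p * U j p) * dd (dd L (Ej i)) (Ej j) p) = - Itg t (\<lambda>p. dd (\<lambda>q. R q * U i q * U j q) (Ej j) p * dd L (Ej i) p)"
      by (rule Itg_ibp[OF t]) simp_all
    have c1: "Itg t (\<lambda>p. dd (dd L (Ej i)) (Ej j) p * (R p * U i p * U j p)) = Itg t (\<lambda>p. (R p * U i p * U j p) * dd (dd L (Ej i)) (Ej j) p)"
      by (rule Itg_cong[OF t]) simp
    have c2: "Itg t (\<lambda>p. dd (\<lambda>q. R q * U i q * U j q) (Ej j) p * dd L (Ej i) p) =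
      Itg t (\<lambda>p. R p * (U i p * dd (U j) (Ej j) p * dd L (Ej i) p + dd L (Ej i) p * dd (U i) (Ej j) p * U j p
              + dd L (Ej i) p * U i p * (dd L (Ej j) p * U j p)))"
      by (rule Itg_cong[OF t]) (simp add: ddR_L algebra_simps)
    show ?thesis using ibp c1 c2 by simp
  qed
  have Y: "(\<Sum>i\<in>UNIV. \<Sum>j\<in>UNIV. Itg t (\<lambda>p. dd (dd L (Ej i)) (Ej j) p * (R p * U i p * U j p)))
      = - Itg t (\<lambda>p. R p * (?A p * ?B p + ?T p + ?A p * ?A p))"
  proof -
    have "(\<Sum>i\<in>UNIV. \<Sum>j\<in>UNIV. Itg t (\<lambda>p. dd (dd L (Ej i)) (Ej j) p * (R p * U i p * U j p))) =
       - Itg t (\<lambda>p. \<Sum>i\<in>UNIV. \<Sum>j\<in>UNIV. R p * (U i p * dd (U j) (Ej j) p * dd L (Ej i) p + dd L (Ej i) p * dd (U i) (Ej j) p * U j p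
              + dd L (Ej i) p * U i p * (dd L (Ej j) p * U j p)))"
      unfolding Y1 by (simp add: sum_negf)
    also have "Itg t (\<lambda>p. \<Sum>i\<in>UNIV. \<Sum>j\<in>UNIV. R p * (U i p * dd (U j) (Ej j) p * dd L (Ej i) p + dd L (Ej i) p * dd (U i) (Ej j) p * U j p
              + dd L (Ej i) p * U i p * (dd L (Ej j) p * U j p))) = Itg t (\<lambda>p. R p * (?A p * ?B p + ?T p + ?A p * ?A p))"
      by (rule Itg_cong[OF t]) (simp add: sum_distrib_left sum_distrib_right sum.distrib algebra_simps)
    finally show ?thesis .
  qed
  have V1: "Itg t (\<lambda>p. R p * dd (U i) (Ej j) p * dd (U j) (Ej i) p) =
      - Itg t (\<lambda>p. R p * dd (dd (U i) (Ej i)) (Ej j) p * U j p) - Itg t (\<lambda>p. R p * (dd L (Ej i) p * dd (U i) (Ej j) p * U j p))" for i j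
  proof -
    have ibp: "Itg t (\<lambda>p. (R p * dd (U i) (Ej j) p) * dd (U j) (Ej i) p) = - Itg t (\<lambda>p. dd (\<lambda>q. R q * dd (U i) (Ej j) q) (Ej i) p * U j p)"
      by (rule Itg_ibp[OF t]) simp_all
    have c2: "Itg t (\<lambda>p. dd (\<lambda>q. R q * dd (U i) (Ej j) q) (Ej i) p * U j p) =
      Itg t (\<lambda>p. R p * dd (dd (U i) (Ej i)) (Ej j) p * U j p + R p * (dd L (Ej i) p * dd (U i) (Ej j) p * U j p))"
      by (rule Itg_cong[OF t]) (simp add: ddR_L schwU[of _ i "Ej j" "Ej i"] algebra_simps)
    show ?thesis using ibp c2 by simp
  qed
  have V2: "(\<Sum>i\<in>UNIV. Itg t (\<lambda>p. R p * dd (dd (U i) (Ej i)) (Ej j) p * U j p)) = - Itg t (\<lambda>p. R p * (dd (U j) (Ej j) p + dd L (Ej j) p * U j p) * ?B p)" for j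
  proof -
    have "(\<Sum>i\<in>UNIV. Itg t (\<lambda>p. R p * dd (dd (U i) (Ej i)) (Ej j) p * U j p)) = Itg t (\<lambda>p. (R p * U j p) * dd ?B (Ej j) p)"
    proof -
      have "Itg t (\<lambda>p. (R p * U j p) * dd ?B (Ej j) p) = Itg t (\<lambda>p. \<Sum>i\<in>UNIV. R p * dd (dd (U i) (Ej i)) (Ej j) p * U j p)"
        by (rule Itg_cong[OF t]) (simp add: sum_distrib_left algebra_simps)
      then show ?thesis by simp
    qed
    also have "\<dots> = - Itg t (\<lambda>p. dd (\<lambda>q. R q * U j q) (Ej j) p * ?B p)"
      by (rule Itg_ibp[OF t]) simp_all
    also have "Itg t (\<lambda>p. dd (\<lambda>q. R q * U j q) (Ej j) p * ?B p) = Itg t (\<lambda>p. R p * (dd (U j) (Ej j) p + dd L (Ej j) p * U j p) * ?B p)"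
      by (rule Itg_cong[OF t]) (simp add: ddR_L algebra_simps)
    finally show ?thesis .
  qed
  have V: "(\<Sum>i\<in>UNIV. \<Sum>j\<in>UNIV. Itg t (\<lambda>p. R p * dd (U i) (Ej j) p * dd (U j) (Ej i) p))
     = Itg t (\<lambda>p. R p * (?B p + ?A p) * ?B p - R p * ?T p)"
  proof -
    have "(\<Sum>i\<in>UNIV. \<Sum>j\<in>UNIV. Itg t (\<lambda>p. R p * dd (U i) (Ej j) p * dd (U j) (Ej i) p))
       = - (\<Sum>j\<in>UNIV. \<Sum>i\<in>UNIV. Itg t (\<lambda>p. R p * dd (dd (U i) (Ej i)) (Ej j) p * U j p))
         - (\<Sum>i\<in>UNIV. \<Sum>j\<in>UNIV. Itg t (\<lambda>p. R p * (dd L (Ej i) p * dd (U i) (Ej j) p * U j p)))"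
      unfolding V1 sum_subtractf sum_negf
      by (subst sum.swap[of "\<lambda>i j. Itg t (\<lambda>p. R p * dd (dd (U i) (Ej i)) (Ej j) p * U j p)"]) (rule refl)
    also have "\<dots> = (\<Sum>j\<in>UNIV. Itg t (\<lambda>p. R p * (dd (U j) (Ej j) p + dd L (Ej j) p * U j p) * ?B p))
         - Itg t (\<lambda>p. R p * ?T p)"
      unfolding V2 sum_negf by (simp add: sum_distrib_left)
    also have "\<dots> = Itg t (\<lambda>p. R p * (?B p + ?A p) * ?B p - R p * ?T p)"
    proof -
      have "Itg t (\<lambda>p. R p * (?B p + ?A p) * ?B p - R p * ?T p) = Itg t (\<lambda>p. (\<Sum>j\<in>UNIV. R p * (dd (U j) (Ej j) p + dd L (Ej j) p * U j p) * ?B p) - R p * ?T p)"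
        by (rule Itg_cong[OF t]) (simp add: sum_distrib_left sum_distrib_right sum.distrib algebra_simps)
      then show ?thesis by simp
    qed
    finally show ?thesis .
  qed
  have W: "Itg t (\<lambda>p. R p * C p * C p) = Itg t (\<lambda>p. R p * (?A p + ?B p) * (?A p + ?B p))"
    by (rule Itg_cong[OF t]) (simp add: C_def sum.distrib)
  show ?thesis unfolding Y V W
  proof -
    have "Itg t (\<lambda>p. R p * (?A p + ?B p) * (?A p + ?B p)) = Itg t (\<lambda>p. R p * (?A p * ?B p + ?T p + ?A p * ?A p) + (R p * (?B p + ?A p) * ?B p - R p * ?T p))"
      by (rule Itg_cong[OF t]) (simp add: algebra_simps)
    then show "- Itg t (\<lambda>p. R p * (?A p * ?B p + ?T p + ?A p * ?A p)) + Itg t (\<lambda>p. R p * (?A p + ?B p) * (?A p + ?B p)) =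
       Itg t (\<lambda>p. R p * (?B p + ?A p) * ?B p - R p * ?T p)" by simp
  qed
qed

lemma core_id:
  "Itg t (dd (\<lambda>p. \<nu>^2 * R p * (\<Sum>i\<in>UNIV. (dd (\<lambda>q. ln (R q)) (Ej i) p)^2)) E0)
     + \<nu> * \<kappa> * Itg t (\<lambda>p. \<Sum>i\<in>UNIV. \<Sum>j\<in>UNIV. (dd (dd R (Ej j)) (Ej i) p)^2)
   = - Itg t (dd (\<lambda>p. \<nu> * (\<Sum>i\<in>UNIV. U i p * dd R (Ej i) p)) E0)
     + Itg t (\<lambda>p. \<nu> * R p * (\<Sum>i\<in>UNIV. \<Sum>j\<in>UNIV. dd (U i) (Ej j) p * dd (U j) (Ej i) p))"
proof -
  have X: "Itg t (\<lambda>p. \<Sum>i\<in>UNIV. \<Sum>j\<in>UNIV. (dd (dd R (Ej j)) (Ej i) p)^2) = (\<Sum>i\<in>UNIV. \<Sum>k\<in>UNIV. Itg t (\<lambda>p. (dd (dd R (Ej i)) (Ej k) p)^2))"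
  proof -
    have "Itg t (\<lambda>p. \<Sum>i\<in>UNIV. \<Sum>j\<in>UNIV. (dd (dd R (Ej j)) (Ej i) p)^2) = Itg t (\<lambda>p. \<Sum>i\<in>UNIV. \<Sum>k\<in>UNIV. (dd (dd R (Ej i)) (Ej k) p)^2)"
    proof (rule Itg_cong[OF t])
      fix x
      have p: "(t, x) \<in> Om" by simp
      show "(\<Sum>i\<in>UNIV. \<Sum>j\<in>UNIV. (dd (dd R (Ej j)) (Ej i) (t, x))^2) = (\<Sum>i\<in>UNIV. \<Sum>k\<in>UNIV. (dd (dd R (Ej i)) (Ej k) (t, x))^2)"
        by (intro sum.cong refl) (simp add: schwR[OF p])
    qed
    then show ?thesis by simp
  qed
  have V: "Itg t (\<lambda>p. \<nu> * R p * (\<Sum>i\<in>UNIV. \<Sum>j\<in>UNIV. dd (U i) (Ej j) p * dd (U j) (Ej i) p))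
      = \<nu> * (\<Sum>i\<in>UNIV. \<Sum>j\<in>UNIV. Itg t (\<lambda>p. R p * dd (U i) (Ej j) p * dd (U j) (Ej i) p))"
  proof -
    have "Itg t (\<lambda>p. \<nu> * R p * (\<Sum>i\<in>UNIV. \<Sum>j\<in>UNIV. dd (U i) (Ej j) p * dd (U j) (Ej i) p))
       = Itg t (\<lambda>p. \<nu> * (\<Sum>i\<in>UNIV. \<Sum>j\<in>UNIV. R p * dd (U i) (Ej j) p * dd (U j) (Ej i) p))"
      by (rule Itg_cong[OF t]) (simp add: sum_distrib_left mult.assoc)
    then show ?thesis by simp
  qed
  show ?thesis unfolding partE partF X V partII[symmetric] by (simp add: algebra_simps power2_eq_square)
qed

end



lemma SMP_div2[simp]: "SMP a b f \<Longrightarrow> SMP a b (\<lambda>p. f p / c)"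
  using SMP_mult[of a b "\<lambda>p. 1/c" f] by simp

lemma pd_dd:
  assumes "SMP a b G" "s \<in> {a<..<b}"
  shows "pd i (\<lambda>z. G (s, z)) y = dd G (Ej i) (s, y)"
proof -
  have "(s, y) \<in> {a<..<b} \<times> UNIV" using assms(2) by simp
  from SMP_diffat[OF assms(1) this] have d: "G differentiable (at ((s, y) + 0 *\<^sub>R Ej i))" by simp
  have "((\<lambda>h. G ((s, y) + h *\<^sub>R Ej i)) has_field_derivative dd G (Ej i) ((s, y) + 0 *\<^sub>R Ej i)) (at 0)"
    by (rule line_deriv[OF d])
  then have "((\<lambda>h. G (s, y + h *\<^sub>R axis i 1)) has_field_derivative dd G (Ej i) (s, y)) (at 0)"
    by (simp add: Ej_shift)
  then show ?thesis unfolding pd_def by (rule DERIV_imp_deriv)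
qed

lemma deriv_dd:
  assumes "SMP a b G" "s \<in> {a<..<b}"
  shows "deriv (\<lambda>s'. G (s', y)) s = dd G E0 (s, y)"
proof -
  have "(s, y) \<in> {a<..<b} \<times> UNIV" using assms(2) by simp
  from SMP_diffat[OF assms(1) this] have d: "G differentiable (at ((0, y) + s *\<^sub>R E0))" by (simp add: E0_shift)
  have "((\<lambda>s'. G ((0, y) + s' *\<^sub>R E0)) has_field_derivative dd G E0 ((0, y) + s *\<^sub>R E0)) (at s)"
    by (rule line_deriv[OF d])
  then have "((\<lambda>s'. G (s', y)) has_field_derivative dd G E0 (s, y)) (at s)"
    by (simp add: E0_shift)
  then show ?thesis by (rule DERIV_imp_deriv)
qed

lemma Itg_deriv:
  fixes H :: "real \<times> (real^'n::finite) \<Rightarrow> real"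
  assumes H: "SMP a b H" and t: "t \<in> {a<..<b}"
  shows "((\<lambda>s. Itg s H) has_field_derivative Itg t (dd H E0)) (at t)"
proof -
  have "((\<lambda>s. integral (cbox 0 One) (\<lambda>x. H (s, x))) has_field_derivative integral (cbox 0 One) (\<lambda>x. dd H E0 (t, x))) (at t within {a<..<b})"
  proof (rule leibniz_rule_field_derivative[where fx="\<lambda>s x. dd H E0 (s, x)"])
    fix s x assume s: "s \<in> {a<..<b}" and "x \<in> cbox (0::real^'n) One"
    have d: "H differentiable (at ((0, x) + s *\<^sub>R E0))" using SMP_diffat[OF H] s by (simp add: E0_shift)
    from line_deriv[OF d, of "{a<..<b}"]
    show "((\<lambda>s. H (s, x)) has_field_derivative dd H E0 (s, x)) (at s within {a<..<b})"
      by (simp add: E0_shift)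
  next
    fix s assume "s \<in> {a<..<b}"
    then show "(\<lambda>x. H (s, x)) integrable_on cbox 0 One" by (rule SMP_int[OF H])
  next
    have "continuous_on ({a<..<b} \<times> UNIV) (dd H E0)" using SMP_cont[OF SMP_dd[OF H]] .
    then have "continuous_on ({a<..<b} \<times> cbox 0 One) (dd H E0)" by (rule continuous_on_subset) auto
    then show "continuous_on ({a<..<b} \<times> cbox 0 One) (\<lambda>(s, x). dd H E0 (s, x))" by (simp add: split_beta)
  qed (use t in auto)
  then show ?thesis unfolding Itg_def using t by (simp add: at_within_open[of t "{a<..<b}"])
qed

theorem lemma2p2:
  fixes \<rho> :: "real \<Rightarrow> real^'n \<Rightarrow> real"
    and u :: "real \<Rightarrow> real^'n \<Rightarrow> real^'n"
    and \<nu> \<kappa> a b :: real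
  assumes dim: "CARD('n) = 2 \<or> CARD('n) = 3"
    and nu: "\<nu> > 0" and kappa: "\<kappa> > 0"
    and ab: "a < b"
    and smooth_rho: "smooth_on ({a<..<b} \<times> UNIV) (\<lambda>p. \<rho> (fst p) (snd p))"
    and smooth_u: "\<And>i. smooth_on ({a<..<b} \<times> UNIV) (\<lambda>p. u (fst p) (snd p) $ i)"
    and per_rho: "\<And>t. periodic1 (\<rho> t)"
    and per_u: "\<And>t. periodic1 (u t)"
    and pos: "\<And>t x. t \<in> {a<..<b} \<Longrightarrow> \<rho> t x > 0"
    and mass: "\<And>t x. t \<in> {a<..<b} \<Longrightarrow>
        deriv (\<lambda>s. \<rho> s x) t + (\<Sum>j\<in>UNIV. pd j (\<lambda>y. \<rho> t y * u t y $ j) x) = 0"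
    and momentum: "\<And>t x i. t \<in> {a<..<b} \<Longrightarrow>
        deriv (\<lambda>s. \<rho> s x * u s x $ i) t
        + (\<Sum>j\<in>UNIV. pd j (\<lambda>y. \<rho> t y * u t y $ i * u t y $ j) x)
        - 2 * \<nu> * (\<Sum>j\<in>UNIV. pd j (\<lambda>y. \<rho> t y * symgrad (u t) y i j) x)
        = \<kappa> * \<rho> t x * pd i (lap (\<rho> t)) x"
    and t: "t \<in> {a<..<b}"
  defines "E \<equiv> \<lambda>s. integral (cbox 0 One)
              (\<lambda>x. \<nu>^2 * \<rho> s x * (\<Sum>i\<in>UNIV. (pd i (\<lambda>y. ln (\<rho> s y)) x)^2))"
    and "F \<equiv> \<lambda>s. integral (cbox 0 One)
              (\<lambda>x. \<nu> * (\<Sum>i\<in>UNIV. u s x $ i * pd i (\<rho> s) x))"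
  shows "E differentiable (at t) \<and> F differentiable (at t) \<and>
         deriv E t + \<nu> * \<kappa> * integral (cbox 0 One)
              (\<lambda>x. \<Sum>i\<in>UNIV. \<Sum>j\<in>UNIV. (pd i (pd j (\<rho> t)) x)^2)
       = - deriv F t + integral (cbox 0 One)
              (\<lambda>x. \<nu> * \<rho> t x * (\<Sum>i\<in>UNIV. \<Sum>j\<in>UNIV.
                     pd j (\<lambda>y. u t y $ i) x * pd i (\<lambda>y. u t y $ j) x))"
proof -
  define R where "R = (\<lambda>p::real \<times> (real^'n). \<rho> (fst p) (snd p))"
  define U where "U = (\<lambda>i (p::real \<times> (real^'n)). u (fst p) (snd p) $ i)"
  have Rr: "R (s, y) = \<rho> s y" for s y by (simp add: R_def)
  have Uu: "U i (s, y) = u s y $ i" for i s y by (simp add: U_def)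
  have SR: "SMP a b R" unfolding SMP_def per_def R_def using smooth_rho per_rho by (auto simp: periodic1_def)
  have SU: "SMP a b (U i)" for i
    unfolding SMP_def per_def U_def using smooth_u per_u by (auto simp: periodic1_def)
  have posR: "R p > 0" if "p \<in> {a<..<b} \<times> UNIV" for p using pos that by (cases p) (auto simp: R_def)
  have SL: "SMP a b (\<lambda>q. ln (R q))" by (rule SMP_ln[OF SR posR])
  have rho_eq: "\<rho> s = (\<lambda>z. R (s, z))" for s by (simp add: R_def)
  have pdR: "pd j (\<rho> s) = (\<lambda>y. dd R (Ej j) (s, y))" if s: "s \<in> {a<..<b}" for j s
    by (rule ext) (simp only: rho_eq pd_dd[OF SR s])
  have pdU: "pd j (\<lambda>y. u s y $ i) x = dd (U i) (Ej j) (s, x)" if s: "s \<in> {a<..<b}" for i j s x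
    using pd_dd[OF SU[of i] s, of j x] by (simp add: Uu)
  have pdL: "pd i (\<lambda>y. ln (\<rho> s y)) x = dd (\<lambda>q. ln (R q)) (Ej i) (s, x)" if s: "s \<in> {a<..<b}" for i s x
    using pd_dd[OF SL s, of i x] by (simp add: Rr)
  have lapR: "lap (\<rho> s) = (\<lambda>y. \<Sum>k\<in>UNIV. dd (dd R (Ej k)) (Ej k) (s, y))" if s: "s \<in> {a<..<b}" for s
  proof (rule ext)
    fix y
    show "lap (\<rho> s) y = (\<Sum>k\<in>UNIV. dd (dd R (Ej k)) (Ej k) (s, y))"
      unfolding lap_def pdR[OF s] using pd_dd[OF SMP_dd[OF SR] s] by simp
  qed
  have mass': "dd R E0 p + (\<Sum>j\<in>UNIV. dd (\<lambda>q. R q * U j q) (Ej j) p) = 0" if p: "p \<in> {a<..<b} \<times> UNIV" for p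
  proof -
    obtain s x where px: "p = (s, x)" by (cases p)
    have s: "s \<in> {a<..<b}" using p px by auto
    have "deriv (\<lambda>s. \<rho> s x) s = dd R E0 (s, x)" using deriv_dd[OF SR s, of x] by (simp add: Rr)
    moreover have "pd j (\<lambda>y. \<rho> s y * u s y $ j) x = dd (\<lambda>q. R q * U j q) (Ej j) (s, x)" for j
      using pd_dd[OF SMP_mult[OF SR SU[of j]] s, of j x] by (simp add: Rr Uu)
    ultimately show ?thesis using mass[OF s, of x] px by simp
  qed
  have mom': "dd (\<lambda>q. R q * U i q) E0 p
        + (\<Sum>j\<in>UNIV. dd (\<lambda>q. R q * U i q * U j q) (Ej j) p)
        - 2 * \<nu> * (\<Sum>j\<in>UNIV. dd (\<lambda>q. R q * ((dd (U i) (Ej j) q + dd (U j) (Ej i) q) / 2)) (Ej j) p)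
        = \<kappa> * R p * dd (\<lambda>q. \<Sum>k\<in>UNIV. dd (dd R (Ej k)) (Ej k) q) (Ej i) p"
    if p: "p \<in> {a<..<b} \<times> UNIV" for p i
  proof -
    obtain s x where px: "p = (s, x)" by (cases p)
    have s: "s \<in> {a<..<b}" using p px by auto
    have 1: "deriv (\<lambda>s. \<rho> s x * u s x $ i) s = dd (\<lambda>q. R q * U i q) E0 (s, x)"
      using deriv_dd[OF SMP_mult[OF SR SU[of i]] s, of x] by (simp add: Rr Uu)
    have 2: "pd j (\<lambda>y. \<rho> s y * u s y $ i * u s y $ j) x = dd (\<lambda>q. R q * U i q * U j q) (Ej j) (s, x)" for j
      using pd_dd[OF SMP_mult[OF SMP_mult[OF SR SU[of i]] SU[of j]] s, of j x] by (simp add: Rr Uu)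
    have sg: "symgrad (u s) y i j = (dd (U i) (Ej j) (s, y) + dd (U j) (Ej i) (s, y)) / 2" for y j
      unfolding symgrad_def using pdU[OF s] by simp
    have 3: "pd j (\<lambda>y. \<rho> s y * symgrad (u s) y i j) x = dd (\<lambda>q. R q * ((dd (U i) (Ej j) q + dd (U j) (Ej i) q) / 2)) (Ej j) (s, x)" for j
      using pd_dd[of a b "\<lambda>q. R q * ((dd (U i) (Ej j) q + dd (U j) (Ej i) q) / 2)" s j x] s SR SU
      by (simp add: Rr sg)
    have 4: "pd i (lap (\<rho> s)) x = dd (\<lambda>q. \<Sum>k\<in>UNIV. dd (dd R (Ej k)) (Ej k) q) (Ej i) (s, x)"
      unfolding lapR[OF s] using pd_dd[of a b "\<lambda>q. \<Sum>k\<in>UNIV. dd (dd R (Ej k)) (Ej k) q" s i x] s SR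
      by simp
    show ?thesis using momentum[OF s, of x i] px 1 2 3 4 by (simp add: Rr)
  qed
  interpret c: core a b t R U \<nu> \<kappa>
    by unfold_locales (use t SR SU posR mass' mom' in auto)
  define HE where "HE = (\<lambda>p. \<nu>^2 * R p * (\<Sum>i\<in>UNIV. (dd (\<lambda>q. ln (R q)) (Ej i) p)^2))"
  define HF where "HF = (\<lambda>p. \<nu> * (\<Sum>i\<in>UNIV. U i p * dd R (Ej i) p))"
  have SHE: "SMP a b HE" unfolding HE_def using SR SL by simp
  have SHF: "SMP a b HF" unfolding HF_def using SR SU by simp
  have EI: "E s = Itg s HE" if s: "s \<in> {a<..<b}" for s
    unfolding E_def Itg_def HE_def by (simp add: pdL[OF s] Rr)
  have FI: "F s = Itg s HF" if s: "s \<in> {a<..<b}" for s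
    unfolding F_def Itg_def HF_def by (simp add: pdR[OF s] Rr Uu)
  have DE: "(E has_field_derivative Itg t (dd HE E0)) (at t)"
    by (rule has_field_derivative_transform_within_open[OF Itg_deriv[OF SHE t] _ t]) (auto simp: EI)
  have DF: "(F has_field_derivative Itg t (dd HF E0)) (at t)"
    by (rule has_field_derivative_transform_within_open[OF Itg_deriv[OF SHF t] _ t]) (auto simp: FI)
  have K: "integral (cbox 0 One) (\<lambda>x. \<Sum>i\<in>UNIV. \<Sum>j\<in>UNIV. (pd i (pd j (\<rho> t)) x)^2)
      = Itg t (\<lambda>p. \<Sum>i\<in>UNIV. \<Sum>j\<in>UNIV. (dd (dd R (Ej j)) (Ej i) p)^2)"
    unfolding Itg_def pdR[OF t] using pd_dd[OF SMP_dd[OF SR] t] by simp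
  have V: "integral (cbox 0 One) (\<lambda>x. \<nu> * \<rho> t x * (\<Sum>i\<in>UNIV. \<Sum>j\<in>UNIV. pd j (\<lambda>y. u t y $ i) x * pd i (\<lambda>y. u t y $ j) x))
      = Itg t (\<lambda>p. \<nu> * R p * (\<Sum>i\<in>UNIV. \<Sum>j\<in>UNIV. dd (U i) (Ej j) p * dd (U j) (Ej i) p))"
    unfolding Itg_def by (simp add: pdU[OF t] Rr)
  have "E differentiable (at t)" using DE unfolding has_field_derivative_def differentiable_def by blast
  moreover have "F differentiable (at t)" using DF unfolding has_field_derivative_def differentiable_def by blast
  moreover have "deriv E t = Itg t (dd HE E0)" by (rule DERIV_imp_deriv[OF DE])
  moreover have "deriv F t = Itg t (dd HF E0)" by (rule DERIV_imp_deriv[OF DF])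
  ultimately show ?thesis unfolding K V HE_def HF_def using c.core_id by simp
qed

end
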